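(* For every multi-sender unicast index-coding instance (with any sender sets $\mathcal S_1,\dots,\mathcal S_K$, any side-information sets $\mathcal A_1,\dots,\mathcal A_N$ and any link capacities $C_1,\dots,C_K>0$), the region $\mathcal R_{\mathrm{CLS}}$ defined in the context is contained in the capacity region: $\mathcal R_{\mathrm{CLS}}\subseteq\mathcal C$.
   Context: Model. There are $N$ independent messages $M_1,\dots,M_N$, where for block length $n$ and rates $R_j\ge 0$, $M_j$ is uniform on $[1:2^{nR_j}]$. There are $K$ senders; sender $k$ knows the messages $M_i$, $i\in\mathcal S_k\subseteq[1:N]$ (the sets $\mathcal S_k$ are pairwise distinct and $\bigcup_k\mathcal S_k=[1:N]$), and is connected to all receivers by a noiseless broadcast link of capacity $C_k>0$ bits per channel use. There are $N$ receivers; receiver $j$ knows $M_i$, $i\in\mathcal A_j\subseteq[1:N]\setminus\{j\}$, and requests $M_j$. For real $c\ge0$ write $[1:2^c)=\{1,\dots,2^{\lfloor c\rfloor}\}$. A code of length $n$ consists of encoders $f_k:\prod_{i\in\mathcal S_k}[1:2^{nR_i}]\to[1:2^{nC_k})$ producing $L_k$, and decoders $g_j$ mapping $(L_1,\dots,L_K)$ and $(M_i)_{i\in\mathcal A_j}$ to an estimate $\hat M_j$. A rate tuple $(R_1,\dots,R_N)$ is achievable if there is a sequence of such codes with $\Pr[(\hat M_1,\dots,\hat M_N)\ne(M_1,\dots,M_N)]\to0$ as $n\to\infty$; the capacity region $\mathcal C$ is the closure of the set of achievable rate tuples. Definition of $\mathcal R_{\mathrm{CLS}}$. A joint link-and-sender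 partition is a pair $(\tilde\Pi,\mathbf C_{\tilde\Pi})$ where $\tilde\Pi$ is a collection of pairwise distinct nonempty subsets $\tilde P\subseteq[1:K]$ with $\bigcup_{\tilde P\in\tilde\Pi}\tilde P=[1:K]$ (the subsets may overlap), and $\mathbf C_{\tilde\Pi}=(C_{k,\tilde P}:k\in\tilde P,\tilde P\in\tilde\Pi)$ satisfies $C_{k,\tilde P}>0$ and $\sum_{\tilde P\in\tilde\Pi:k\in\tilde P}C_{k,\tilde P}\le C_k$ for each $k$ (admissible). For $\tilde P\in\tilde\Pi$ let $\mathcal S_{\tilde P}=\bigcup_{k\in\tilde P}\mathcal S_k$ and $\mathcal A_{j,\tilde P}=\mathcal A_j\cap\mathcal S_{\tilde P}$. For $\tilde{\mathcal K}\subseteq\tilde P$ let $\tilde{\mathcal K}^c=\tilde P\setminus\tilde{\mathcal K}$ and $\mathcal I_{\tilde{\mathcal K}}=\bigcup_{k\in\tilde{\mathcal K}}\{\mathcal J\ne\emptyset:\mathcal J\subseteq\mathcal S_k\}$. A decoding choice for $\tilde P$ is a family $\{\mathcal D_{j,\tilde P}:j\in\mathcal S_{\tilde P}\}$ with $j\in\mathcal D_{j,\tilde P}\subseteq\mathcal S_{\tilde P}\setminus\mathcal A_{j,\tilde P}$. For a fixed decoding choice, let $\mathcal R(\{\mathcal D_{j,\tilde P}\},\mathbf C_{\tilde P}\mid\{\mathcal A_{j,\tilde P}\})$ be the set of $(R_{j,\tilde P}:j\in\mathcal S_{\tilde P})\in\mathbb R_+^{|\mathcal S_{\tilde P}|}$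 for which there exist composite rates $\gamma_{\mathcal J,\tilde P}\ge0$, one for each $\mathcal J\in\mathcal I_{\tilde P}$ (and set $\gamma_{\mathcal J,\tilde P}=0$ for nonempty $\mathcal J\subseteq\mathcal S_{\tilde P}$ not in $\mathcal I_{\tilde P}$), such that (a) $\sum_{i\in\mathcal T}R_{i,\tilde P}<\sum_{\mathcal J_1\subseteq\mathcal D_{j,\tilde P}\cup\mathcal A_{j,\tilde P},\ \mathcal J_1\cap\mathcal T\ne\emptyset}\gamma_{\mathcal J_1,\tilde P}$ for all nonempty $\mathcal T\subseteq\mathcal D_{j,\tilde P}$ and all $j\in\mathcal S_{\tilde P}$; and (b) $\sum_{\mathcal J_2\in\mathcal I_{\tilde{\mathcal K}},\ \mathcal J_2\notin\mathcal I_{\tilde{\mathcal K}^c},\ \mathcal J_2\not\subseteq\mathcal A_{j,\tilde P}}\gamma_{\mathcal J_2,\tilde P}<\sum_{k\in\tilde{\mathcal K}}C_{k,\tilde P}$ for all $j\in\mathcal S_{\tilde P}$ and all nonempty $\tilde{\mathcal K}\subseteq\tilde P$. Let $\mathcal R_{(\tilde P,\mathbf C_{\tilde P})}$ be the union of these regions over all decoding choices for $\tilde P$. Let $\mathcal R_{\mathrm{CLS}}(\tilde\Pi,\mathbf C_{\tilde\Pi})$ be the set of $(R_1,\dots,R_N)\in\mathbb R_+^N$ such that $R_j=\sum_{\tilde P\in\tilde\Pi:j\in\mathcal S_{\tilde P}}R_{j,\tilde P}$ for all $j$, for some $(R_{j,\tilde P}:j\in\mathcal S_{\tilde P})\in\mathcal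 R_{(\tilde P,\mathbf C_{\tilde P})}$ for every $\tilde P\in\tilde\Pi$ and some admissible $\mathbf C_{\tilde\Pi}$. Finally $\mathcal R_{\mathrm{CLS}}$ is the convex hull of the union of $\mathcal R_{\mathrm{CLS}}(\tilde\Pi,\mathbf C_{\tilde\Pi})$ over all such $\tilde\Pi$. *)

theory Defs
  imports "HOL-Analysis.Analysis"
begin

text \<open>Messages are indexed by a finite type 'm
 (playing the role of [1:N]), senders by a finite type 'k (playing the role of [1:K]).
 S k = set of messages known to sender k, A j = side information of receiver j,
 C k = capacity of the broadcast link of sender k.\<close>

text \<open>[1:2^c) = {1, ..., 2^floor c}\<close>
definition idx_set :: "real \<Rightarrow> nat set" where
  "idx_set c = {1 .. 2 ^ nat \<lfloor>c\<rfloor>}"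

definition msg_set :: "nat \<Rightarrow> real ^ 'm \<Rightarrow> ('m \<Rightarrow> nat) set" where
  "msg_set n R = {m. \<forall>i. m i \<in> idx_set (real n * R $ i)}"

text \<open>A code of length n: encoders f k (depending only on the messages in S k, with output
 in [1:2^(nC_k))) and decoders g j (taking (L_1,...,L_K) and depending on the messages only
 through the side information A j).\<close>
definition is_code ::
  "('k \<Rightarrow> 'm set) \<Rightarrow> ('m \<Rightarrow> 'm set) \<Rightarrow> ('k \<Rightarrow> real) \<Rightarrow> nat \<Rightarrow> real ^ 'm
   \<Rightarrow> ('k \<Rightarrow> ('m \<Rightarrow> nat) \<Rightarrow> nat) \<Rightarrow> ('m \<Rightarrow> ('k \<Rightarrow> nat) \<Rightarrow> ('m \<Rightarrow> nat) \<Rightarrow> nat) \<Rightarrow> bool" where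
  "is_code S A C n R f g \<longleftrightarrow>
     (\<forall>k. \<forall>m \<in> msg_set n R. f k m \<in> idx_set (real n * C k)) \<and>
     (\<forall>k. \<forall>m \<in> msg_set n R. \<forall>m' \<in> msg_set n R.
          (\<forall>i \<in> S k. m i = m' i) \<longrightarrow> f k m = f k m') \<and>
     (\<forall>j L. \<forall>m \<in> msg_set n R. \<forall>m' \<in> msg_set n R.
          (\<forall>i \<in> A j. m i = m' i) \<longrightarrow> g j L m = g j L m')"

text \<open>Error probability under uniformly distributed independent messages.\<close>
definition err_prob ::
  "nat \<Rightarrow> real ^ 'm \<Rightarrow> ('k \<Rightarrow> ('m \<Rightarrow> nat) \<Rightarrow> nat)
   \<Rightarrow> ('m \<Rightarrow> ('k \<Rightarrow> nat) \<Rightarrow> ('m \<Rightarrow> nat) \<Rightarrow> nat) \<Rightarrow> real" where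
  "err_prob n R f g =
     real (card {m \<in> msg_set n R. \<exists>j. g j (\<lambda>k. f k m) m \<noteq> m j})
     / real (card (msg_set n R))"

definition achievable ::
  "('k \<Rightarrow> 'm set) \<Rightarrow> ('m \<Rightarrow> 'm set) \<Rightarrow> ('k \<Rightarrow> real) \<Rightarrow> real ^ 'm \<Rightarrow> bool" where
  "achievable S A C R \<longleftrightarrow> (\<forall>i. R $ i \<ge> 0) \<and>
     (\<exists>f g. (\<forall>n. is_code S A C n R (f n) (g n)) \<and>
            (\<lambda>n. err_prob n R (f n) (g n)) \<longlonglongrightarrow> 0)"

definition capacity_region ::
  "('k \<Rightarrow> 'm set) \<Rightarrow> ('m \<Rightarrow> 'm set) \<Rightarrow> ('k \<Rightarrow> real) \<Rightarrow> (real ^ 'm) set" where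
  "capacity_region S A C = closure {R. achievable S A C R}"

definition SP :: "('k \<Rightarrow> 'm set) \<Rightarrow> 'k set \<Rightarrow> 'm set" where
  "SP S P = (\<Union>k\<in>P. S k)"

definition Iset :: "('k \<Rightarrow> 'm set) \<Rightarrow> 'k set \<Rightarrow> 'm set set" where
  "Iset S K = (\<Union>k\<in>K. {J. J \<noteq> {} \<and> J \<subseteq> S k})"

definition decoding_choice ::
  "('k \<Rightarrow> 'm set) \<Rightarrow> ('m \<Rightarrow> 'm set) \<Rightarrow> 'k set \<Rightarrow> ('m \<Rightarrow> 'm set) \<Rightarrow> bool" where
  "decoding_choice S A P D \<longleftrightarrow>
     (\<forall>j \<in> SP S P. j \<in> D j \<and> D j \<subseteq> SP S P - (A j \<inter> SP S P))"

text \<open>The region R({D_{j,P}}, C_P | {A_{j,P}}); r holds (R_{j,P}) on S_P and is 0 elsewhere;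
 CP k = C_{k,P}.\<close>
definition region_D ::
  "('k \<Rightarrow> 'm set) \<Rightarrow> ('m \<Rightarrow> 'm set) \<Rightarrow> 'k set \<Rightarrow> ('k \<Rightarrow> real) \<Rightarrow> ('m \<Rightarrow> 'm set)
   \<Rightarrow> (real ^ 'm) set" where
  "region_D S A P CP D = {r.
     (\<forall>j. r $ j \<ge> 0) \<and> (\<forall>j. j \<notin> SP S P \<longrightarrow> r $ j = 0) \<and>
     (\<exists>\<gamma> :: 'm set \<Rightarrow> real.
        (\<forall>J \<in> Iset S P. \<gamma> J \<ge> 0) \<and> (\<forall>J. J \<notin> Iset S P \<longrightarrow> \<gamma> J = 0) \<and>
        (\<forall>j \<in> SP S P. \<forall>T. T \<noteq> {} \<and> T \<subseteq> D j \<longrightarrow>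
           (\<Sum>i\<in>T. r $ i) <
           (\<Sum>J1 \<in> {J. J \<subseteq> D j \<union> (A j \<inter> SP S P) \<and> J \<inter> T \<noteq> {}}. \<gamma> J1)) \<and>
        (\<forall>j \<in> SP S P. \<forall>K. K \<noteq> {} \<and> K \<subseteq> P \<longrightarrow>
           (\<Sum>J2 \<in> {J \<in> Iset S K. J \<notin> Iset S (P - K) \<and> \<not> J \<subseteq> A j \<inter> SP S P}. \<gamma> J2)
           < (\<Sum>k\<in>K. CP k)))}"

definition region_P ::
  "('k \<Rightarrow> 'm set) \<Rightarrow> ('m \<Rightarrow> 'm set) \<Rightarrow> 'k set \<Rightarrow> ('k \<Rightarrow> real) \<Rightarrow> (real ^ 'm) set" where
  "region_P S A P CP = (\<Union>D \<in> {D. decoding_choice S A P D}. region_D S A P CP D)"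

text \<open>Joint link-and-sender partition (Pis, C_Pi); CPi P k = C_{k,P}.\<close>
definition link_sender_partition :: "'k set set \<Rightarrow> bool" where
  "link_sender_partition Pis \<longleftrightarrow> (\<forall>P\<in>Pis. P \<noteq> {}) \<and> \<Union>Pis = UNIV"

definition admissible :: "('k \<Rightarrow> real) \<Rightarrow> 'k set set \<Rightarrow> ('k set \<Rightarrow> 'k \<Rightarrow> real) \<Rightarrow> bool" where
  "admissible C Pis CPi \<longleftrightarrow>
     (\<forall>P\<in>Pis. \<forall>k\<in>P. CPi P k > 0) \<and>
     (\<forall>k. (\<Sum>P \<in> {P \<in> Pis. k \<in> P}. CPi P k) \<le> C k)"

definition R_CLS_part ::
  "('k \<Rightarrow> 'm set) \<Rightarrow> ('m \<Rightarrow> 'm set) \<Rightarrow> 'k set set \<Rightarrow> ('k set \<Rightarrow> 'k \<Rightarrow> real) \<Rightarrow> (real ^ 'm) set" where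
  "R_CLS_part S A Pis CPi = {R. (\<forall>j. R $ j \<ge> 0) \<and>
     (\<exists>rr :: 'k set \<Rightarrow> real ^ 'm.
        (\<forall>P\<in>Pis. rr P \<in> region_P S A P (CPi P)) \<and>
        (\<forall>j. R $ j = (\<Sum>P \<in> {P \<in> Pis. j \<in> SP S P}. rr P $ j)))}"

definition R_CLS ::
  "('k \<Rightarrow> 'm set) \<Rightarrow> ('m \<Rightarrow> 'm set) \<Rightarrow> ('k \<Rightarrow> real) \<Rightarrow> (real ^ 'm) set" where
  "R_CLS S A C = convex hull
     (\<Union>{R_CLS_part S A Pis CPi | Pis CPi. link_sender_partition Pis \<and> admissible C Pis CPi})"

end

theory Submission
  imports Defs
begin


definition CSp :: "'x set \<Rightarrow> ('x \<Rightarrow> 'd set) \<Rightarrow> ('x \<Rightarrow> nat) \<Rightarrow> ('x \<Rightarrow> 'd \<Rightarrow> nat) set" where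
  "CSp X Dom B = PiE X (\<lambda>x. PiE (Dom x) (\<lambda>_. {1..B x}))"

lemma single_collision:
  fixes Dom :: "'d set" and B :: nat
  assumes fin: "finite Dom" and ab: "a \<in> Dom" "b \<in> Dom" "a \<noteq> b"
  shows "card {f \<in> PiE Dom (\<lambda>_. {1..B}). f a = f b} * B = card (PiE Dom (\<lambda>_. {1..B}))"
proof -
  let ?F = "PiE Dom (\<lambda>_. {1..B})"
  define \<psi> where "\<psi> y d v = (if d = a \<or> d = b then (if v = y then 1 else 0) else (1::nat))" for y :: nat and d and v :: nat
  have "card {f \<in> ?F. f a = f b} = (\<Sum>f\<in>?F. if f a = f b then 1 else (0::nat))"
    using fin by (simp add: sum.If_cases finite_PiE Int_def)
  also have "\<dots> = (\<Sum>f\<in>?F. \<Sum>y\<in>{1..B}. \<Prod>d\<in>Dom. \<psi> y d (f d))"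
  proof (rule sum.cong[OF refl])
    fix f assume f: "f \<in> ?F"
    have p: "(\<Prod>d\<in>Dom. \<psi> y d (f d)) = (if f a = y then 1 else 0) * (if f b = y then 1 else 0)" for y
    proof -
      have "(\<Prod>d\<in>Dom. \<psi> y d (f d)) = \<psi> y a (f a) * (\<Prod>d\<in>Dom - {a}. \<psi> y d (f d))"
        using fin ab by (simp add: prod.remove)
      also have "(\<Prod>d\<in>Dom - {a}. \<psi> y d (f d)) = \<psi> y b (f b) * (\<Prod>d\<in>Dom - {a} - {b}. \<psi> y d (f d))"
        by (rule prod.remove) (use fin ab in auto)
      also have "(\<Prod>d\<in>Dom - {a} - {b}. \<psi> y d (f d)) = 1"
        by (rule prod.neutral) (simp add: \<psi>_def)
      finally show ?thesis by (simp add: \<psi>_def)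
    qed
    have "f a \<in> {1..B}" using f ab by auto
    then show "(if f a = f b then 1 else 0) = (\<Sum>y\<in>{1..B}. \<Prod>d\<in>Dom. \<psi> y d (f d))"
      unfolding p by (simp add: sum.delta' mult.commute[of "if f a = _ then 1 else 0"] if_distrib cong: if_cong)
  qed
  also have "\<dots> = (\<Sum>y\<in>{1..B}. \<Sum>f\<in>?F. \<Prod>d\<in>Dom. \<psi> y d (f d))"
    by (rule sum.swap)
  also have "\<dots> = (\<Sum>y\<in>{1..B}. \<Prod>d\<in>Dom. \<Sum>v\<in>{1..B}. \<psi> y d v)"
    using fin by (simp add: prod_sum_PiE)
  also have "\<dots> = (\<Sum>y\<in>{1..B}. B ^ (card Dom - 2))"
  proof (rule sum.cong[OF refl])
    fix y assume y: "y \<in> {1..B}"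
    have "(\<Prod>d\<in>Dom. \<Sum>v\<in>{1..B}. \<psi> y d v) = (\<Prod>d\<in>Dom - {a} - {b}. \<Sum>v\<in>{1..B}. \<psi> y d v)"
    proof -
      have "(\<Prod>d\<in>Dom. \<Sum>v\<in>{1..B}. \<psi> y d v) = (\<Sum>v\<in>{1..B}. \<psi> y a v) * (\<Prod>d\<in>Dom - {a}. \<Sum>v\<in>{1..B}. \<psi> y d v)"
        using fin ab by (simp add: prod.remove)
      also have "(\<Prod>d\<in>Dom - {a}. \<Sum>v\<in>{1..B}. \<psi> y d v) = (\<Sum>v\<in>{1..B}. \<psi> y b v) * (\<Prod>d\<in>Dom - {a} - {b}. \<Sum>v\<in>{1..B}. \<psi> y d v)"
        by (rule prod.remove) (use fin ab in auto)
      finally show ?thesis using y by (simp add: \<psi>_def sum.If_cases)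
    qed
    also have "\<dots> = (\<Prod>d\<in>Dom - {a} - {b}. B)"
      by (rule prod.cong[OF refl]) (simp add: \<psi>_def)
    also have "\<dots> = B ^ (card Dom - 2)"
      using fin ab by (simp add: card_Diff_subset numeral_2_eq_2)
    finally show "(\<Prod>d\<in>Dom. \<Sum>v\<in>{1..B}. \<psi> y d v) = B ^ (card Dom - 2)" .
  qed
  also have "\<dots> = B * B ^ (card Dom - 2)" by simp
  finally have c: "card {f \<in> ?F. f a = f b} = B * B ^ (card Dom - 2)" .
  have "card Dom \<ge> 2"
  proof -
    have "{a,b} \<subseteq> Dom" using ab by auto
    then have "card {a,b} \<le> card Dom" using fin by (rule card_mono[rotated])
    then show ?thesis using ab by simp
  qed
  then obtain c where "card Dom = c + 2" by (metis le_add_diff_inverse2)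
  then have "B * B ^ (card Dom - 2) * B = B ^ card Dom" by (simp add: power_add mult.commute)
  moreover have "card ?F = B ^ card Dom" using fin by (simp add: card_PiE)
  ultimately show ?thesis using c by simp
qed

lemma multi_collision:
  fixes X :: "'x set" and Dom :: "'x \<Rightarrow> 'd set" and B :: "'x \<Rightarrow> nat"
  assumes fin: "finite X" and finD: "\<forall>x\<in>X. finite (Dom x)" and KX: "K \<subseteq> X"
    and ab: "\<forall>x\<in>K. a x \<in> Dom x \<and> b x \<in> Dom x \<and> a x \<noteq> b x"
  shows "card {h \<in> CSp X Dom B. \<forall>x\<in>K. h x (a x) = h x (b x)} * (\<Prod>x\<in>K. B x) = card (CSp X Dom B)"
proof -
  let ?F = "\<lambda>x. PiE (Dom x) (\<lambda>_. {1..B x})"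
  define \<phi> where "\<phi> x f = (if x \<in> K then (if f (a x) = f (b x) then 1 else 0) else (1::nat))" for x and f :: "'d \<Rightarrow> nat"
  have finF: "finite (?F x)" if "x \<in> X" for x using finD that by (simp add: finite_PiE)
  have finK: "finite K" using fin KX finite_subset by blast
  have "card {h \<in> CSp X Dom B. \<forall>x\<in>K. h x (a x) = h x (b x)} = (\<Sum>h\<in>CSp X Dom B. \<Prod>x\<in>X. \<phi> x (h x))"
  proof -
    have "(\<Sum>h\<in>CSp X Dom B. \<Prod>x\<in>X. \<phi> x (h x)) = (\<Sum>h\<in>CSp X Dom B. if (\<forall>x\<in>K. h x (a x) = h x (b x)) then 1 else 0)"
    proof (rule sum.cong[OF refl])
      fix h
      have "(\<Prod>x\<in>X. \<phi> x (h x)) = (\<Prod>x\<in>K. \<phi> x (h x))"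
        using fin KX by (intro prod.mono_neutral_right) (auto simp: \<phi>_def)
      also have "\<dots> = (if (\<forall>x\<in>K. h x (a x) = h x (b x)) then 1 else 0)"
      proof (cases "\<forall>x\<in>K. h x (a x) = h x (b x)")
        case True then show ?thesis by (simp add: \<phi>_def)
      next
        case False
        then obtain x where "x \<in> K" "h x (a x) \<noteq> h x (b x)" by auto
        then show ?thesis using finK False by (simp add: \<phi>_def prod_zero_iff)
      qed
      finally show "(\<Prod>x\<in>X. \<phi> x (h x)) = (if (\<forall>x\<in>K. h x (a x) = h x (b x)) then 1 else 0)" .
    qed
    also have "\<dots> = card {h \<in> CSp X Dom B. \<forall>x\<in>K. h x (a x) = h x (b x)}"
      using fin finD unfolding CSp_def by (simp add: sum.If_cases finite_PiE Int_def)
    finally show ?thesis by simp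
  qed
  also have "\<dots> = (\<Prod>x\<in>X. \<Sum>f\<in>?F x. \<phi> x f)"
    unfolding CSp_def using fin finF by (simp add: prod_sum_PiE)
  finally have e1: "card {h \<in> CSp X Dom B. \<forall>x\<in>K. h x (a x) = h x (b x)} = (\<Prod>x\<in>X. \<Sum>f\<in>?F x. \<phi> x f)" .
  have "(\<Prod>x\<in>X. \<Sum>f\<in>?F x. \<phi> x f) = (\<Prod>x\<in>K. \<Sum>f\<in>?F x. \<phi> x f) * (\<Prod>x\<in>X - K. \<Sum>f\<in>?F x. \<phi> x f)"
    using fin KX by (metis (no_types, lifting) prod.subset_diff mult.commute)
  moreover have "(\<Prod>x\<in>K. \<Sum>f\<in>?F x. \<phi> x f) * (\<Prod>x\<in>K. B x) = (\<Prod>x\<in>K. card (?F x))"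
  proof -
    have "(\<Prod>x\<in>K. \<Sum>f\<in>?F x. \<phi> x f) * (\<Prod>x\<in>K. B x) = (\<Prod>x\<in>K. (\<Sum>f\<in>?F x. \<phi> x f) * B x)"
      by (simp add: prod.distrib)
    also have "\<dots> = (\<Prod>x\<in>K. card (?F x))"
    proof (rule prod.cong[OF refl])
      fix x assume x: "x \<in> K"
      have "(\<Sum>f\<in>?F x. \<phi> x f) = card {f \<in> ?F x. f (a x) = f (b x)}"
        using x finD KX by (simp add: \<phi>_def sum.If_cases finite_PiE Int_def subset_iff)
      then show "(\<Sum>f\<in>?F x. \<phi> x f) * B x = card (?F x)"
        using single_collision[of "Dom x" "a x" "b x" "B x"] x finD KX ab by auto
    qed
    finally show ?thesis .
  qed
  moreover have "(\<Prod>x\<in>X - K. \<Sum>f\<in>?F x. \<phi> x f) = (\<Prod>x\<in>X - K. card (?F x))"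
    by (rule prod.cong[OF refl]) (simp add: \<phi>_def)
  moreover have "card (CSp X Dom B) = (\<Prod>x\<in>K. card (?F x)) * (\<Prod>x\<in>X - K. card (?F x))"
    unfolding CSp_def using fin KX by (simp add: card_PiE) (metis (no_types, lifting) prod.subset_diff mult.commute)
  ultimately show ?thesis using e1 by (metis (no_types, lifting) mult.assoc mult.commute)
qed




definition mask :: "'m set \<Rightarrow> ('m \<Rightarrow> nat) \<Rightarrow> 'm \<Rightarrow> nat" where
  "mask M m = (\<lambda>t. if t \<in> M then m t else 1)"

locale pieces =
  fixes S :: "'k::finite \<Rightarrow> 'm::finite set" and A :: "'m \<Rightarrow> 'm set" and C :: "'k \<Rightarrow> real"
    and I :: "'i set" and PP :: "'i \<Rightarrow> 'k set" and CP :: "'i \<Rightarrow> 'k \<Rightarrow> real"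
    and DD :: "'i \<Rightarrow> 'm \<Rightarrow> 'm set" and rr :: "'i \<Rightarrow> 'm \<Rightarrow> real" and gg :: "'i \<Rightarrow> 'm set \<Rightarrow> real"
  assumes finI: "finite I"
   and CPpos: "\<forall>i\<in>I. \<forall>k\<in>PP i. CP i k > 0"
   and rr_nn: "\<forall>i\<in>I. \<forall>j. rr i j \<ge> 0"
   and rr_zero: "\<forall>i\<in>I. \<forall>j. j \<notin> SP S (PP i) \<longrightarrow> rr i j = 0"
   and gg_nn: "\<forall>i\<in>I. \<forall>J\<in>Iset S (PP i). gg i J \<ge> 0"
   and gg_zero: "\<forall>i\<in>I. \<forall>J. J \<notin> Iset S (PP i) \<longrightarrow> gg i J = 0"
   and dc: "\<forall>i\<in>I. decoding_choice S A (PP i) (DD i)"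
   and condA: "\<forall>i\<in>I. \<forall>j\<in>SP S (PP i). \<forall>T. T \<noteq> {} \<and> T \<subseteq> DD i j \<longrightarrow>
           (\<Sum>t\<in>T. rr i t) <
           (\<Sum>J1 \<in> {J. J \<subseteq> DD i j \<union> (A j \<inter> SP S (PP i)) \<and> J \<inter> T \<noteq> {}}. gg i J1)"
   and condB: "\<forall>i\<in>I. \<forall>j\<in>SP S (PP i). \<forall>K. K \<noteq> {} \<and> K \<subseteq> PP i \<longrightarrow>
           (\<Sum>J2 \<in> {J \<in> Iset S K. J \<notin> Iset S (PP i - K) \<and> \<not> J \<subseteq> A j \<inter> SP S (PP i)}. gg i J2)
           < (\<Sum>k\<in>K. CP i k)"
   and cap: "\<forall>k. (\<Sum>i\<in>{i\<in>I. k \<in> PP i}. CP i k) \<le> C k"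
begin

definition "Rt = (\<chi> j. \<Sum>i\<in>I. rr i j)"
definition "Comp i = Iset S (PP i)"
definition "CompK i k = {J \<in> Comp i. J \<subseteq> S k}"
definition "Bm n i t = (2::nat) ^ nat \<lceil>real n * rr i t\<rceil>"
definition "BW n i J = (2::nat) ^ nat \<lfloor>real n * gg i J\<rfloor>"
definition "Bh n i k = (2::nat) ^ nat \<lfloor>real n * CP i k\<rfloor>"
definition "XW = Sigma I Comp"
definition "DomW n = (\<lambda>(i,J). PiE J (\<lambda>t. {1..Bm n i t}))"
definition "BWf n = (\<lambda>(i,J). BW n i J)"
definition "XH = Sigma I PP"
definition "DomH n = (\<lambda>(i,k). PiE (CompK i k) (\<lambda>J. {1..BW n i J}))"
definition "Bhf n = (\<lambda>(i,k). Bh n i k)"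
definition "CSW n = CSp XW (DomW n) (BWf n)"
definition "CSH n = CSp XH (DomH n) (Bhf n)"
definition "Msz n t = (2::nat) ^ nat \<lfloor>real n * Rt $ t\<rfloor>"
definition "SubR n t = PiE I (\<lambda>i. {1..Bm n i t})"
definition "split n t = (SOME s. inj_on s {1..Msz n t} \<and> s ` {1..Msz n t} \<subseteq> SubR n t)"
definition "usub n m i t = split n t (m t) i"
definition "wtr WF uu i = (\<lambda>J\<in>Comp i. WF (i,J) (restrict (uu i) J))"
definition "lk WF HF uu i k = HF (i,k) (restrict (wtr WF uu i) (CompK i k))"
definition "Ik k = {i\<in>I. k \<in> PP i}"
definition "LR n k = PiE (Ik k) (\<lambda>i. {1..Bh n i k})"
definition "enc n k = (SOME e. bij_betw e (LR n k) {1..card (LR n k)})"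
definition "fenc n WF HF k m = enc n k (\<lambda>i\<in>Ik k. lk WF HF (usub n (mask (S k) m)) i k)"
definition "Cand1 n WF HF i j uu Lk = {w \<in> PiE (Comp i) (\<lambda>J. {1..BW n i J}).
   (\<forall>J\<in>Comp i. J \<subseteq> A j \<longrightarrow> w J = WF (i,J) (restrict uu J)) \<and>
   (\<forall>k\<in>PP i. HF (i,k) (restrict w (CompK i k)) = Lk k)}"
definition "Cand2 n WF i j uu w = {v \<in> PiE (DD i j \<union> (A j \<inter> SP S (PP i))) (\<lambda>t. {1..Bm n i t}).
   (\<forall>t\<in>A j \<inter> SP S (PP i). v t = uu t) \<and>
   (\<forall>J\<in>Comp i. J \<subseteq> DD i j \<union> A j \<longrightarrow> WF (i,J) (restrict v J) = w J)}"
definition "decp n WF HF i j uu Lk =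
   (let w = (SOME w. w \<in> Cand1 n WF HF i j uu Lk) in (SOME v. v \<in> Cand2 n WF i j uu w) j)"
definition "gdec n WF HF j L m =
   (let uu = usub n (mask (A j) m);
        Lp = (\<lambda>i k. inv_into (LR n k) (enc n k) (L k) i);
        d = (\<lambda>i\<in>I. if j \<in> SP S (PP i) then decp n WF HF i j (uu i) (Lp i) else 1)
    in inv_into {1..Msz n j} (split n j) d)"

lemma finite_Comp: "finite (Comp i)" by simp
lemma Comp_sub: "J \<in> Comp i \<Longrightarrow> J \<subseteq> SP S (PP i)"
  unfolding Comp_def Iset_def SP_def by auto
lemma Comp_ne: "J \<in> Comp i \<Longrightarrow> J \<noteq> {}"
  unfolding Comp_def Iset_def by auto

lemma idx_Msz: "idx_set (real n * Rt $ t) = {1..Msz n t}"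
  unfolding idx_set_def Msz_def by simp

lemma msg_set_iff: "m \<in> msg_set n Rt \<longleftrightarrow> (\<forall>t. m t \<in> {1..Msz n t})"
  unfolding msg_set_def idx_Msz by simp

lemma Bm_pos: "Bm n i t \<ge> 1" unfolding Bm_def by simp
lemma BW_pos: "BW n i J \<ge> 1" unfolding BW_def by simp
lemma Bh_pos: "Bh n i k \<ge> 1" unfolding Bh_def by simp

lemma split_exists: "\<exists>s. inj_on s {1..Msz n t} \<and> s ` {1..Msz n t} \<subseteq> SubR n t"
proof -
  have "nat \<lfloor>real n * Rt $ t\<rfloor> \<le> (\<Sum>i\<in>I. nat \<lceil>real n * rr i t\<rceil>)"
  proof -
    have "real n * Rt $ t = (\<Sum>i\<in>I. real n * rr i t)" unfolding Rt_def by (simp add: sum_distrib_left)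
    also have "\<dots> \<le> (\<Sum>i\<in>I. real (nat \<lceil>real n * rr i t\<rceil>))"
      by (intro sum_mono) linarith
    finally have "real n * Rt $ t \<le> real (\<Sum>i\<in>I. nat \<lceil>real n * rr i t\<rceil>)" by simp
    then show ?thesis by linarith
  qed
  then have "Msz n t \<le> (\<Prod>i\<in>I. Bm n i t)"
    unfolding Msz_def Bm_def by (simp add: power_sum[symmetric])
  then have "card {1..Msz n t} \<le> card (SubR n t)" unfolding SubR_def using finI by (simp add: card_PiE)
  then show ?thesis using card_le_inj[of "{1..Msz n t}" "SubR n t"] finI
    unfolding SubR_def by (auto simp: finite_PiE)
qed

lemma split_props: "inj_on (split n t) {1..Msz n t}" "split n t ` {1..Msz n t} \<subseteq> SubR n t"
  using someI_ex[OF split_exists[of n t]] unfolding split_def by auto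

lemma usub_range:
  assumes "m t \<in> {1..Msz n t}" "i \<in> I"
  shows "usub n m i t \<in> {1..Bm n i t}"
proof -
  have "split n t (m t) \<in> SubR n t" using split_props(2)[of n t] assms(1) by blast
  then show ?thesis using assms(2) unfolding usub_def SubR_def by (auto simp: PiE_iff)
qed

lemma usub_zero:
  assumes "m t \<in> {1..Msz n t}" "i \<in> I" "t \<notin> SP S (PP i)"
  shows "usub n m i t = 1"
proof -
  have "Bm n i t = 1" using rr_zero assms unfolding Bm_def by simp
  then show ?thesis using usub_range[of m t n i] assms by simp
qed

lemma enc_exists: "\<exists>e. bij_betw e (LR n k) {1..card (LR n k)}"
  by (rule finite_same_card_bij) (auto simp: LR_def Ik_def finI finite_PiE)

lemma enc_bij: "bij_betw (enc n k) (LR n k) {1..card (LR n k)}"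
  using someI_ex[OF enc_exists] unfolding enc_def by blast

lemma card_LR: "card (LR n k) \<le> 2 ^ nat \<lfloor>real n * C k\<rfloor>"
proof -
  have fin: "finite (Ik k)" using finI unfolding Ik_def by simp
  have "(\<Sum>i\<in>Ik k. nat \<lfloor>real n * CP i k\<rfloor>) \<le> nat \<lfloor>real n * C k\<rfloor>"
  proof -
    have "real (\<Sum>i\<in>Ik k. nat \<lfloor>real n * CP i k\<rfloor>) = (\<Sum>i\<in>Ik k. real (nat \<lfloor>real n * CP i k\<rfloor>))" by simp
    also have "\<dots> \<le> (\<Sum>i\<in>Ik k. real n * CP i k)"
    proof (rule sum_mono)
      fix i assume "i \<in> Ik k"
      then have "CP i k > 0" using CPpos unfolding Ik_def by auto
      then have "real n * CP i k \<ge> 0" by simp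
      then show "real (nat \<lfloor>real n * CP i k\<rfloor>) \<le> real n * CP i k" by linarith
    qed
    also have "\<dots> = real n * (\<Sum>i\<in>Ik k. CP i k)" by (simp add: sum_distrib_left)
    also have "\<dots> \<le> real n * C k" using cap unfolding Ik_def by (intro mult_left_mono) auto
    finally show ?thesis by linarith
  qed
  then have "(2::nat) ^ (\<Sum>i\<in>Ik k. nat \<lfloor>real n * CP i k\<rfloor>) \<le> 2 ^ nat \<lfloor>real n * C k\<rfloor>"
    by (intro power_increasing) auto
  moreover have "card (LR n k) = 2 ^ (\<Sum>i\<in>Ik k. nat \<lfloor>real n * CP i k\<rfloor>)"
    unfolding LR_def using fin by (simp add: card_PiE Bh_def power_sum)
  ultimately show ?thesis by simp
qed


definition "subok n uu \<longleftrightarrow> (\<forall>i\<in>I. \<forall>t. uu i t \<in> {1..Bm n i t})"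

lemma subok_usub: "m \<in> msg_set n Rt \<Longrightarrow> subok n (usub n m)"
  unfolding subok_def msg_set_iff using usub_range by blast

lemma mask_msg: "m \<in> msg_set n Rt \<Longrightarrow> mask M m \<in> msg_set n Rt"
  unfolding msg_set_iff mask_def by (auto simp: Msz_def)

lemma WF_range:
  assumes "WF \<in> CSW n" "i \<in> I" "J \<in> Comp i" "x \<in> PiE J (\<lambda>t. {1..Bm n i t})"
  shows "WF (i,J) x \<in> {1..BW n i J}"
proof -
  have "WF (i,J) \<in> PiE (DomW n (i,J)) (\<lambda>_. {1..BWf n (i,J)})"
    using assms(1-3) unfolding CSW_def CSp_def XW_def by (auto simp: PiE_iff)
  then show ?thesis using assms(4) unfolding DomW_def BWf_def by (auto simp: PiE_iff)
qed

lemma HF_range: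
  assumes "HF \<in> CSH n" "i \<in> I" "k \<in> PP i" "y \<in> PiE (CompK i k) (\<lambda>J. {1..BW n i J})"
  shows "HF (i,k) y \<in> {1..Bh n i k}"
proof -
  have "HF (i,k) \<in> PiE (DomH n (i,k)) (\<lambda>_. {1..Bhf n (i,k)})"
    using assms(1-3) unfolding CSH_def CSp_def XH_def by (auto simp: PiE_iff)
  then show ?thesis using assms(4) unfolding DomH_def Bhf_def by (auto simp: PiE_iff)
qed

lemma restrict_sub_in: "subok n uu \<Longrightarrow> i \<in> I \<Longrightarrow> restrict (uu i) J \<in> PiE J (\<lambda>t. {1..Bm n i t})"
  unfolding subok_def by auto

lemma wtr_in:
  assumes "WF \<in> CSW n" "subok n uu" "i \<in> I"
  shows "wtr WF uu i \<in> PiE (Comp i) (\<lambda>J. {1..BW n i J})"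
  using WF_range[OF assms(1,3) _ restrict_sub_in[OF assms(2,3)]] unfolding wtr_def by auto

lemma restrict_wtr_in:
  assumes "WF \<in> CSW n" "subok n uu" "i \<in> I"
  shows "restrict (wtr WF uu i) (CompK i k) \<in> PiE (CompK i k) (\<lambda>J. {1..BW n i J})"
  using wtr_in[OF assms] unfolding CompK_def by (auto simp: PiE_iff)

lemma lk_range:
  assumes "WF \<in> CSW n" "HF \<in> CSH n" "subok n uu" "i \<in> I" "k \<in> PP i"
  shows "lk WF HF uu i k \<in> {1..Bh n i k}"
  unfolding lk_def using HF_range[OF assms(2,4,5) restrict_wtr_in[OF assms(1,3,4)]] .

lemma tuple_LR:
  assumes "WF \<in> CSW n" "HF \<in> CSH n" "subok n uu"
  shows "(\<lambda>i\<in>Ik k. lk WF HF uu i k) \<in> LR n k"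
  unfolding LR_def using lk_range[OF assms] by (auto simp: Ik_def)

lemma is_code_fg:
  assumes "WF \<in> CSW n" "HF \<in> CSH n"
  shows "is_code S A C n Rt (\<lambda>k m. fenc n WF HF k m) (\<lambda>j L m. gdec n WF HF j L m)"
  unfolding is_code_def
proof (intro conjI allI ballI impI)
  fix k m assume m: "m \<in> msg_set n Rt"
  have "(\<lambda>i\<in>Ik k. lk WF HF (usub n (mask (S k) m)) i k) \<in> LR n k"
    by (rule tuple_LR[OF assms subok_usub[OF mask_msg[OF m]]])
  then have "fenc n WF HF k m \<in> {1..card (LR n k)}"
    unfolding fenc_def using enc_bij[of n k] by (auto simp: bij_betw_def)
  then show "fenc n WF HF k m \<in> idx_set (real n * C k)"
    using card_LR[of n k] unfolding idx_set_def by auto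
next
  fix k and m m' :: "'m \<Rightarrow> nat" assume "\<forall>i\<in>S k. m i = m' i"
  then have "mask (S k) m = mask (S k) m'" unfolding mask_def by auto
  then show "fenc n WF HF k m = fenc n WF HF k m'" unfolding fenc_def by simp
next
  fix j L and m m' :: "'m \<Rightarrow> nat" assume "\<forall>i\<in>A j. m i = m' i"
  then have "mask (A j) m = mask (A j) m'" unfolding mask_def by auto
  then show "gdec n WF HF j L m = gdec n WF HF j L m'" unfolding gdec_def by simp
qed

end



context pieces begin

definition "err1 n WF HF m i j \<longleftrightarrow>
  (\<exists>w \<in> Cand1 n WF HF i j (usub n m i) (lk WF HF (usub n m) i). w \<noteq> wtr WF (usub n m) i)"
definition "err2 n WF m i j \<longleftrightarrow>
  (\<exists>v \<in> Cand2 n WF i j (usub n m i) (wtr WF (usub n m) i).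
      v \<noteq> restrict (usub n m i) (DD i j \<union> (A j \<inter> SP S (PP i))))"

lemma usub_mask: "t \<in> M \<Longrightarrow> usub n (mask M m) i t = usub n m i t"
  unfolding usub_def mask_def by simp

lemma restrict_usub_mask: "J \<subseteq> M \<Longrightarrow> restrict (usub n (mask M m) i) J = restrict (usub n m i) J"
  using usub_mask[of _ M n m i] by (auto simp: restrict_def fun_eq_iff)

lemma lk_mask: "i \<in> I \<Longrightarrow> lk WF HF (usub n (mask (S k) m)) i k = lk WF HF (usub n m) i k"
  unfolding lk_def
proof -
  have "restrict (wtr WF (usub n (mask (S k) m)) i) (CompK i k) = restrict (wtr WF (usub n m) i) (CompK i k)"
    unfolding wtr_def CompK_def using restrict_usub_mask[of _ "S k" n m i]
    by (auto simp: restrict_def fun_eq_iff)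
  then show "HF (i, k) (restrict (wtr WF (usub n (mask (S k) m)) i) (CompK i k)) =
    HF (i, k) (restrict (wtr WF (usub n m) i) (CompK i k))" by simp
qed

lemma Lp_correct:
  assumes "WF \<in> CSW n" "HF \<in> CSH n" "m \<in> msg_set n Rt" "i \<in> I" "k \<in> PP i"
  shows "inv_into (LR n k) (enc n k) (fenc n WF HF k m) i = lk WF HF (usub n m) i k"
proof -
  let ?x = "(\<lambda>i\<in>Ik k. lk WF HF (usub n (mask (S k) m)) i k)"
  have x: "?x \<in> LR n k" by (rule tuple_LR[OF assms(1,2) subok_usub[OF mask_msg[OF assms(3)]]])
  have "inj_on (enc n k) (LR n k)" using enc_bij[of n k] by (simp add: bij_betw_def)
  then have "inv_into (LR n k) (enc n k) (fenc n WF HF k m) = ?x"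
    unfolding fenc_def using x by simp
  then show ?thesis using assms(4,5) lk_mask[OF assms(4)] by (simp add: Ik_def)
qed

lemma Cand1_cong:
  assumes "\<forall>t\<in>A j. uu t = uu' t" "\<forall>k\<in>PP i. Lk k = Lk' k"
  shows "Cand1 n WF HF i j uu Lk = Cand1 n WF HF i j uu' Lk'"
proof -
  have "\<forall>J. J \<subseteq> A j \<longrightarrow> restrict uu J = restrict uu' J" using assms(1) by (auto simp: restrict_def fun_eq_iff)
  then show ?thesis unfolding Cand1_def using assms(2) by auto
qed

lemma Cand2_cong:
  assumes "\<forall>t\<in>A j. uu t = uu' t"
  shows "Cand2 n WF i j uu w = Cand2 n WF i j uu' w"
  unfolding Cand2_def using assms by auto

lemma wt_Cand1:
  assumes "WF \<in> CSW n" "m \<in> msg_set n Rt" "i \<in> I"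
  shows "wtr WF (usub n m) i \<in> Cand1 n WF HF i j (usub n m i) (lk WF HF (usub n m) i)"
  unfolding Cand1_def using wtr_in[OF assms(1) subok_usub[OF assms(2)] assms(3)]
  by (auto simp: wtr_def lk_def)

lemma vt_Cand2:
  assumes "m \<in> msg_set n Rt" "i \<in> I"
  shows "restrict (usub n m i) (DD i j \<union> (A j \<inter> SP S (PP i))) \<in> Cand2 n WF i j (usub n m i) (wtr WF (usub n m) i)"
proof -
  have sub: "subok n (usub n m)" by (rule subok_usub[OF assms(1)])
  have "restrict (restrict (usub n m i) (DD i j \<union> (A j \<inter> SP S (PP i)))) J = restrict (usub n m i) J"
    if "J \<in> Comp i" "J \<subseteq> DD i j \<union> A j" for J
    using that Comp_sub[OF that(1)] by (auto simp: restrict_def fun_eq_iff)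
  then show ?thesis unfolding Cand2_def using sub assms(2) by (auto simp: subok_def wtr_def)
qed

lemma decoding_correct:
  assumes WF: "WF \<in> CSW n" and HF: "HF \<in> CSH n" and m: "m \<in> msg_set n Rt"
    and noerr: "\<forall>i\<in>I. \<forall>j\<in>SP S (PP i). \<not> err1 n WF HF m i j \<and> \<not> err2 n WF m i j"
  shows "gdec n WF HF j (\<lambda>k. fenc n WF HF k m) m = m j"
proof -
  let ?u = "usub n m" and ?u' = "usub n (mask (A j) m)"
  let ?Lp = "\<lambda>i k. inv_into (LR n k) (enc n k) (fenc n WF HF k m) i"
  let ?d = "\<lambda>i\<in>I. if j \<in> SP S (PP i) then decp n WF HF i j (?u' i) (?Lp i) else 1"
  have d: "?d = split n j (m j)"
  proof
    fix i
    show "?d i = split n j (m j) i"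
    proof (cases "i \<in> I")
      case False
      have "split n j (m j) \<in> SubR n j" using split_props(2)[of n j] m by (auto simp: msg_set_iff)
      then show ?thesis using False unfolding SubR_def by auto
    next
      case iI: True
      show ?thesis
      proof (cases "j \<in> SP S (PP i)")
        case False
        then show ?thesis using iI usub_zero[of m j n i] m by (auto simp: msg_set_iff usub_def)
      next
        case jS: True
        have uA: "\<forall>t\<in>A j. ?u' i t = ?u i t" using usub_mask by blast
        have c1: "Cand1 n WF HF i j (?u' i) (?Lp i) = Cand1 n WF HF i j (?u i) (lk WF HF ?u i)"
          by (rule Cand1_cong) (use uA Lp_correct[OF WF HF m iI] in auto)
        have wt: "wtr WF ?u i \<in> Cand1 n WF HF i j (?u i) (lk WF HF ?u i)" by (rule wt_Cand1[OF WF m iI])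
        have "(SOME w. w \<in> Cand1 n WF HF i j (?u' i) (?Lp i)) = wtr WF ?u i"
        proof -
          have "\<forall>w\<in>Cand1 n WF HF i j (?u i) (lk WF HF ?u i). w = wtr WF ?u i"
            using noerr iI jS unfolding err1_def by blast
          then show ?thesis unfolding c1 using wt by (metis someI_ex)
        qed
        moreover have c2: "Cand2 n WF i j (?u' i) (wtr WF ?u i) = Cand2 n WF i j (?u i) (wtr WF ?u i)"
          by (rule Cand2_cong) (use uA in auto)
        moreover have "(SOME v. v \<in> Cand2 n WF i j (?u i) (wtr WF ?u i)) = restrict (?u i) (DD i j \<union> (A j \<inter> SP S (PP i)))"
        proof -
          have "\<forall>v\<in>Cand2 n WF i j (?u i) (wtr WF ?u i). v = restrict (?u i) (DD i j \<union> (A j \<inter> SP S (PP i)))"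
            using noerr iI jS unfolding err2_def by blast
          then show ?thesis using vt_Cand2[OF m iI, of j WF] by (metis someI_ex)
        qed
        moreover have "j \<in> DD i j" using dc iI jS unfolding decoding_choice_def by auto
        ultimately show ?thesis using iI jS unfolding decp_def by (simp add: usub_def)
      qed
    qed
  qed
  have "gdec n WF HF j (\<lambda>k. fenc n WF HF k m) m = inv_into {1..Msz n j} (split n j) (split n j (m j))"
    unfolding gdec_def Let_def using d by simp
  also have "\<dots> = m j" using split_props(1)[of n j] m by (simp add: msg_set_iff)
  finally show ?thesis .
qed

end



lemma nat_eq_div_real: "(a::nat) * p = b \<Longrightarrow> p > 0 \<Longrightarrow> real a = real b / real p"
  by (metis nonzero_mult_div_cancel_right of_nat_0_less_iff of_nat_mult less_irrefl)

lemma stage_bound: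
  fixes X :: "'x set" and Dom :: "'x \<Rightarrow> ('y \<Rightarrow> 'v) set" and B :: "'x \<Rightarrow> nat"
    and Y :: "'y set" and Rg :: "'y \<Rightarrow> 'v set" and Sup :: "'x \<Rightarrow> 'y set"
  assumes finX: "finite X" and finD: "\<forall>x\<in>X. finite (Dom x)" and QX: "Q \<subseteq> X" and Bpos: "\<forall>x. B x \<ge> 1"
    and finY: "finite Y" and finR: "\<forall>y\<in>Y. finite (Rg y)" and z: "z \<in> PiE Y Rg" and FY: "F \<subseteq> Y"
    and dom: "\<forall>x\<in>Q. \<forall>v\<in>PiE Y Rg. restrict v (Sup x) \<in> Dom x"
  shows "(\<Sum>c\<in>CSp X Dom B. real (card ({v\<in>PiE Y Rg. (\<forall>y\<in>Y-F. v y = z y) \<and>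
            (\<forall>x\<in>Q. c x (restrict v (Sup x)) = c x (restrict z (Sup x)))} - {z})))
     \<le> real (card (CSp X Dom B)) *
        (\<Sum>T\<in>{T. T \<subseteq> F \<and> T \<noteq> {}}. real (\<Prod>y\<in>T. card (Rg y)) / real (\<Prod>x\<in>{x\<in>Q. Sup x \<inter> T \<noteq> {}}. B x))"
proof -
  let ?CS = "CSp X Dom B"
  let ?V = "{v\<in>PiE Y Rg. (\<forall>y\<in>Y-F. v y = z y)} - {z}"
  let ?eq = "\<lambda>c v x. c x (restrict v (Sup x)) = c x (restrict z (Sup x))"
  let ?Tv = "\<lambda>v. {y\<in>Y. v y \<noteq> z y}"
  let ?g = "\<lambda>T. 1 / real (\<Prod>x\<in>{x\<in>Q. Sup x \<inter> T \<noteq> {}}. B x)"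
  let ?TT = "{T. T \<subseteq> F \<and> T \<noteq> {}}"
  have finCS: "finite ?CS" unfolding CSp_def using finX finD by (auto intro!: finite_PiE)
  have finV: "finite ?V" using finY finR by (auto intro: finite_subset[OF _ finite_PiE[of Y Rg]])
  have finTT: "finite ?TT" using finite_subset[OF FY finY] by (auto intro: finite_subset[of _ "Pow F"])
  have set_eq: "{v\<in>PiE Y Rg. (\<forall>y\<in>Y-F. v y = z y) \<and> (\<forall>x\<in>Q. ?eq c v x)} - {z} = {v\<in>?V. \<forall>x\<in>Q. ?eq c v x}" for c
    by auto
  have "(\<Sum>c\<in>?CS. real (card {v\<in>?V. \<forall>x\<in>Q. ?eq c v x})) = (\<Sum>c\<in>?CS. \<Sum>v\<in>?V. if (\<forall>x\<in>Q. ?eq c v x) then 1 else 0)"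
    using finV by (simp add: sum.If_cases Int_def)
  also have "\<dots> = (\<Sum>v\<in>?V. \<Sum>c\<in>?CS. if (\<forall>x\<in>Q. ?eq c v x) then 1 else 0)" by (rule sum.swap)
  also have "\<dots> = (\<Sum>v\<in>?V. real (card ?CS) * ?g (?Tv v))"
  proof (rule sum.cong[OF refl])
    fix v assume v: "v \<in> ?V"
    let ?K = "{x\<in>Q. Sup x \<inter> ?Tv v \<noteq> {}}"
    have vY: "v \<in> PiE Y Rg" using v by auto
    have eqiff: "(\<forall>x\<in>Q. ?eq c v x) \<longleftrightarrow> (\<forall>x\<in>?K. ?eq c v x)" for c
    proof -
      have "restrict v (Sup x) = restrict z (Sup x)" if "x \<in> Q" "Sup x \<inter> ?Tv v = {}" for x
      proof
        fix y show "restrict v (Sup x) y = restrict z (Sup x) y"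
        proof (cases "y \<in> Y")
          case True then show ?thesis using that by auto
        next
          case False then show ?thesis using vY z by (auto simp: PiE_iff extensional_def)
        qed
      qed
      then show ?thesis by auto
    qed
    have ne: "restrict v (Sup x) \<noteq> restrict z (Sup x)" if xK: "x \<in> ?K" for x
    proof -
      obtain y where "y \<in> Sup x" "y \<in> Y" "v y \<noteq> z y" using xK by blast
      then have "restrict v (Sup x) y \<noteq> restrict z (Sup x) y" by simp
      then show ?thesis by metis
    qed
    have mc: "card {c \<in> ?CS. \<forall>x\<in>?K. c x (restrict v (Sup x)) = c x (restrict z (Sup x))} * (\<Prod>x\<in>?K. B x) = card ?CS"
      by (rule multi_collision[OF finX finD]) (use QX dom vY z ne in auto)
    have pos: "(\<Prod>x\<in>?K. B x) > 0" using Bpos by (simp add: prod_pos less_le_trans[OF zero_less_one])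
    have "(\<Sum>c\<in>?CS. if (\<forall>x\<in>Q. ?eq c v x) then 1 else (0::real)) = real (card {c \<in> ?CS. \<forall>x\<in>?K. ?eq c v x})"
      using finCS by (simp add: eqiff sum.If_cases Int_def)
    also have "\<dots> = real (card ?CS) * ?g (?Tv v)"
      using nat_eq_div_real[OF mc pos] by simp
    finally show "(\<Sum>c\<in>?CS. if (\<forall>x\<in>Q. ?eq c v x) then 1 else (0::real)) = real (card ?CS) * ?g (?Tv v)" .
  qed
  also have "\<dots> = real (card ?CS) * (\<Sum>v\<in>?V. ?g (?Tv v))" by (simp add: sum_distrib_left)
  finally have s1: "(\<Sum>c\<in>?CS. real (card {v\<in>?V. \<forall>x\<in>Q. ?eq c v x})) = real (card ?CS) * (\<Sum>v\<in>?V. ?g (?Tv v))" .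
  have s2: "(\<Sum>v\<in>?V. ?g (?Tv v)) = (\<Sum>T\<in>?TT. \<Sum>v\<in>{v\<in>?V. ?Tv v = T}. ?g (?Tv v))"
  proof (rule sum.group[symmetric, OF finV finTT])
    show "?Tv ` ?V \<subseteq> ?TT"
    proof
      fix T assume "T \<in> ?Tv ` ?V"
      then obtain v where v: "v \<in> ?V" "T = ?Tv v" by auto
      have "T \<subseteq> F" using v by auto
      moreover have "T \<noteq> {}"
      proof
        assume "T = {}"
        then have "\<forall>y\<in>Y. v y = z y" using v by auto
        then have "v = z" using v(1) z by (auto simp: PiE_iff extensional_def fun_eq_iff)
        then show False using v by auto
      qed
      ultimately show "T \<in> ?TT" by auto
    qed
  qed
  have s3: "(\<Sum>T\<in>?TT. \<Sum>v\<in>{v\<in>?V. ?Tv v = T}. ?g (?Tv v)) \<le> (\<Sum>T\<in>?TT. real (\<Prod>y\<in>T. card (Rg y)) * ?g T)"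
  proof (rule sum_mono)
    fix T assume T: "T \<in> ?TT"
    have TF: "T \<subseteq> F" using T by simp
    have finT: "finite T" by (rule finite_subset[OF subset_trans[OF TF FY] finY])
    have "(\<Sum>v\<in>{v\<in>?V. ?Tv v = T}. ?g (?Tv v)) = (\<Sum>v\<in>{v\<in>?V. ?Tv v = T}. ?g T)"
      by (rule sum.cong) auto
    also have "\<dots> = real (card {v\<in>?V. ?Tv v = T}) * ?g T" by (rule sum_constant)
    also have "\<dots> \<le> real (\<Prod>y\<in>T. card (Rg y)) * ?g T"
    proof (rule mult_right_mono)
      have "card {v\<in>?V. ?Tv v = T} \<le> card (PiE T Rg)"
      proof (rule card_inj_on_le)
        show "inj_on (\<lambda>v. restrict v T) {v\<in>?V. ?Tv v = T}"
        proof (rule inj_onI)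
          fix v w assume v: "v \<in> {v\<in>?V. ?Tv v = T}" and w: "w \<in> {v\<in>?V. ?Tv v = T}"
            and e: "restrict v T = restrict w T"
          have vP: "v \<in> PiE Y Rg" and vT: "{y\<in>Y. v y \<noteq> z y} = T" using v by blast+
          have wP: "w \<in> PiE Y Rg" and wT: "{y\<in>Y. w y \<noteq> z y} = T" using w by blast+
          show "v = w"
          proof
            fix y
            show "v y = w y"
            proof (cases "y \<in> T")
              case True then have "restrict v T y = restrict w T y" using e by simp
              then show ?thesis using True by simp
            next
              case False
              show ?thesis
              proof (cases "y \<in> Y")
                case True
                then have "v y = z y" "w y = z y" using False vT wT by blast+
                then show ?thesis by simp
              next
                case yY: False
                then have "v y = undefined" "w y = undefined" using vP wP by (simp_all add: PiE_def extensional_def)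
                then show ?thesis by simp
              qed
            qed
          qed
        qed
        show "(\<lambda>v. restrict v T) ` {v\<in>?V. ?Tv v = T} \<subseteq> PiE T Rg"
        proof
          fix x assume "x \<in> (\<lambda>v. restrict v T) ` {v\<in>?V. ?Tv v = T}"
          then obtain v where "v \<in> PiE Y Rg" "x = restrict v T" by blast
          then show "x \<in> PiE T Rg" using T FY by (auto simp: PiE_iff)
        qed
        show "finite (PiE T Rg)" using T FY finT finR by (intro finite_PiE) auto
      qed
      also have "\<dots> = (\<Prod>y\<in>T. card (Rg y))" using finT by (intro card_PiE)
      finally show "real (card {v\<in>?V. ?Tv v = T}) \<le> real (\<Prod>y\<in>T. card (Rg y))" by linarith
    qed (simp add: prod_nonneg)
    finally show "(\<Sum>v\<in>{v\<in>?V. ?Tv v = T}. ?g (?Tv v)) \<le> real (\<Prod>y\<in>T. card (Rg y)) * ?g T" .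
  qed
  have main: "(\<Sum>c\<in>?CS. real (card {v\<in>?V. \<forall>x\<in>Q. ?eq c v x})) \<le>
     real (card ?CS) * (\<Sum>T\<in>?TT. real (\<Prod>y\<in>T. card (Rg y)) * ?g T)"
    unfolding s1 s2 by (rule mult_left_mono[OF s3]) simp
  then show ?thesis unfolding set_eq by simp
qed




lemma Pair_filter: "{x \<in> Pair i ` P. Q (snd x)} = Pair i ` {k\<in>P. Q k}" by auto
lemma Pair_filter2: "{x \<in> Pair i ` P. Q (fst x) (snd x)} = Pair i ` {k\<in>P. Q i k}" by auto

context pieces begin

definition "B2 n i j = (\<Sum>T\<in>{T. T \<subseteq> DD i j \<and> T \<noteq> {}}.
   real (\<Prod>t\<in>T. Bm n i t) / real (\<Prod>J\<in>{J\<in>Comp i. J \<subseteq> DD i j \<union> A j \<and> J \<inter> T \<noteq> {}}. BW n i J))"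
definition "B1 n i j = (\<Sum>E\<in>{E. E \<subseteq> {J\<in>Comp i. \<not> J \<subseteq> A j} \<and> E \<noteq> {}}.
   real (\<Prod>J\<in>E. BW n i J) / real (\<Prod>k\<in>{k\<in>PP i. CompK i k \<inter> E \<noteq> {}}. Bh n i k))"

lemma finXW: "finite XW" unfolding XW_def using finI by auto
lemma finXH: "finite XH" unfolding XH_def using finI by auto
lemma finDomW: "\<forall>x\<in>XW. finite (DomW n x)" unfolding DomW_def by (auto intro!: finite_PiE)
lemma finDomH: "\<forall>x\<in>XH. finite (DomH n x)" unfolding DomH_def by (auto intro!: finite_PiE simp: CompK_def)

lemma DD_props: "i \<in> I \<Longrightarrow> j \<in> SP S (PP i) \<Longrightarrow> DD i j \<subseteq> SP S (PP i) \<and> DD i j \<inter> A j = {}"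
  using dc unfolding decoding_choice_def by blast

lemma stage2:
  assumes m: "m \<in> msg_set n Rt" and i: "i \<in> I" and j: "j \<in> SP S (PP i)"
  shows "(\<Sum>c\<in>CSW n. real (card (Cand2 n c i j (usub n m i) (wtr c (usub n m) i)
              - {restrict (usub n m i) (DD i j \<union> (A j \<inter> SP S (PP i)))})))
         \<le> real (card (CSW n)) * B2 n i j"
proof -
  let ?u = "usub n m"
  let ?Y = "DD i j \<union> (A j \<inter> SP S (PP i))"
  let ?z = "restrict (?u i) ?Y"
  let ?JJ = "{J\<in>Comp i. J \<subseteq> DD i j \<union> A j}"
  let ?Q = "Pair i ` ?JJ"
  let ?Rg = "\<lambda>t. {1..Bm n i t}"
  have sub: "subok n ?u" by (rule subok_usub[OF m])
  have DDp: "DD i j \<subseteq> SP S (PP i)" "DD i j \<inter> A j = {}" using DD_props[OF i j] by auto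
  have z: "?z \<in> PiE ?Y ?Rg" using sub i unfolding subok_def by auto
  have JY: "J \<subseteq> ?Y" if "J \<in> ?JJ" for J using that Comp_sub[of J i] by auto
  have sb: "(\<Sum>c\<in>CSp XW (DomW n) (BWf n). real (card ({v\<in>PiE ?Y ?Rg. (\<forall>y\<in>?Y - DD i j. v y = ?z y) \<and>
            (\<forall>x\<in>?Q. c x (restrict v (snd x)) = c x (restrict ?z (snd x)))} - {?z})))
     \<le> real (card (CSp XW (DomW n) (BWf n))) *
        (\<Sum>T\<in>{T. T \<subseteq> DD i j \<and> T \<noteq> {}}. real (\<Prod>y\<in>T. card (?Rg y)) / real (\<Prod>x\<in>{x\<in>?Q. snd x \<inter> T \<noteq> {}}. BWf n x))"
  proof (rule stage_bound[OF finXW finDomW])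
    show "?Q \<subseteq> XW" unfolding XW_def using i by auto
    show "\<forall>x. 1 \<le> BWf n x" unfolding BWf_def using BW_pos by auto
    show "DD i j \<subseteq> ?Y" by auto
    show "\<forall>x\<in>?Q. \<forall>v\<in>PiE ?Y ?Rg. restrict v (snd x) \<in> DomW n x"
    proof (intro ballI)
      fix x v assume x: "x \<in> ?Q" and v: "v \<in> PiE ?Y ?Rg"
      then obtain J where J: "J \<in> ?JJ" "x = (i,J)" by auto
      show "restrict v (snd x) \<in> DomW n x" using JY[OF J(1)] v J(2) unfolding DomW_def by (auto simp: PiE_iff)
    qed
    show "finite ?Y" by simp
    show "\<forall>y\<in>?Y. finite (?Rg y)" by simp
    show "?z \<in> PiE ?Y ?Rg" by (rule z)
  qed
  have seteq: "{v\<in>PiE ?Y ?Rg. (\<forall>y\<in>?Y - DD i j. v y = ?z y) \<and>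
            (\<forall>x\<in>?Q. c x (restrict v (snd x)) = c x (restrict ?z (snd x)))} = Cand2 n c i j (?u i) (wtr c ?u i)" for c
  proof -
    have a: "?Y - DD i j = A j \<inter> SP S (PP i)" using DDp by auto
    have b: "restrict ?z J = restrict (?u i) J" if "J \<in> ?JJ" for J using JY[OF that] by (auto simp: restrict_def fun_eq_iff)
    have "(\<forall>x\<in>?Q. c x (restrict v (snd x)) = c x (restrict ?z (snd x))) \<longleftrightarrow>
          (\<forall>J\<in>Comp i. J \<subseteq> DD i j \<union> A j \<longrightarrow> c (i,J) (restrict v J) = wtr c ?u i J)" for v
      using b unfolding wtr_def by auto
    then show ?thesis unfolding Cand2_def a by auto
  qed
  have prodeq: "(\<Prod>x\<in>{x\<in>?Q. snd x \<inter> T \<noteq> {}}. BWf n x) = (\<Prod>J\<in>{J\<in>Comp i. J \<subseteq> DD i j \<union> A j \<and> J \<inter> T \<noteq> {}}. BW n i J)" for T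
  proof -
    have "{x\<in>?Q. snd x \<inter> T \<noteq> {}} = Pair i ` {J\<in>Comp i. J \<subseteq> DD i j \<union> A j \<and> J \<inter> T \<noteq> {}}"
      by (auto intro!: image_eqI)
    then show ?thesis by (simp add: prod.reindex inj_on_def BWf_def)
  qed
  show ?thesis using sb unfolding seteq CSW_def[symmetric] B2_def prodeq by simp
qed

lemma stage1:
  assumes WF: "WF \<in> CSW n" and m: "m \<in> msg_set n Rt" and i: "i \<in> I" and j: "j \<in> SP S (PP i)"
  shows "(\<Sum>c\<in>CSH n. real (card (Cand1 n WF c i j (usub n m i) (lk WF c (usub n m) i) - {wtr WF (usub n m) i})))
         \<le> real (card (CSH n)) * B1 n i j"
proof -
  let ?u = "usub n m"
  let ?Y = "Comp i"
  let ?z = "wtr WF ?u i"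
  let ?F = "{J\<in>Comp i. \<not> J \<subseteq> A j}"
  let ?Q = "Pair i ` PP i"
  let ?Rg = "\<lambda>J. {1..BW n i J}"
  let ?Sup = "\<lambda>x. CompK (fst x) (snd x)"
  have sub: "subok n ?u" by (rule subok_usub[OF m])
  have z: "?z \<in> PiE ?Y ?Rg" by (rule wtr_in[OF WF sub i])
  have sb: "(\<Sum>c\<in>CSp XH (DomH n) (Bhf n). real (card ({v\<in>PiE ?Y ?Rg. (\<forall>y\<in>?Y - ?F. v y = ?z y) \<and>
            (\<forall>x\<in>?Q. c x (restrict v (?Sup x)) = c x (restrict ?z (?Sup x)))} - {?z})))
     \<le> real (card (CSp XH (DomH n) (Bhf n))) *
        (\<Sum>T\<in>{T. T \<subseteq> ?F \<and> T \<noteq> {}}. real (\<Prod>y\<in>T. card (?Rg y)) / real (\<Prod>x\<in>{x\<in>?Q. ?Sup x \<inter> T \<noteq> {}}. Bhf n x))"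
  proof (rule stage_bound[OF finXH finDomH])
    show "?Q \<subseteq> XH" unfolding XH_def using i by auto
    show "\<forall>x. 1 \<le> Bhf n x" unfolding Bhf_def using Bh_pos by auto
    show "\<forall>x\<in>?Q. \<forall>v\<in>PiE ?Y ?Rg. restrict v (?Sup x) \<in> DomH n x"
    proof (intro ballI)
      fix x v assume x: "x \<in> ?Q" and v: "v \<in> PiE ?Y ?Rg"
      then obtain k where k: "x = (i,k)" by auto
      show "restrict v (?Sup x) \<in> DomH n x" using v k unfolding DomH_def CompK_def by (auto simp: PiE_iff)
    qed
    show "finite ?Y" by simp
    show "\<forall>y\<in>?Y. finite (?Rg y)" by simp
    show "?z \<in> PiE ?Y ?Rg" by (rule z)
    show "?F \<subseteq> ?Y" by auto
  qed
  have seteq: "{v\<in>PiE ?Y ?Rg. (\<forall>y\<in>?Y - ?F. v y = ?z y) \<and>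
            (\<forall>x\<in>?Q. c x (restrict v (?Sup x)) = c x (restrict ?z (?Sup x)))} = Cand1 n WF c i j (?u i) (lk WF c ?u i)" for c
  proof -
    have "(\<forall>y\<in>?Y - ?F. v y = ?z y) \<longleftrightarrow> (\<forall>J\<in>Comp i. J \<subseteq> A j \<longrightarrow> v J = WF (i,J) (restrict (?u i) J))" for v
      unfolding wtr_def by auto
    moreover have "(\<forall>x\<in>?Q. c x (restrict v (?Sup x)) = c x (restrict ?z (?Sup x))) \<longleftrightarrow>
        (\<forall>k\<in>PP i. c (i,k) (restrict v (CompK i k)) = lk WF c ?u i k)" for v
      unfolding lk_def by auto
    ultimately show ?thesis unfolding Cand1_def by auto
  qed
  have prodeq: "(\<Prod>x\<in>{x\<in>?Q. ?Sup x \<inter> T \<noteq> {}}. Bhf n x) = (\<Prod>k\<in>{k\<in>PP i. CompK i k \<inter> T \<noteq> {}}. Bh n i k)" for T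
  proof -
    have "{x\<in>?Q. ?Sup x \<inter> T \<noteq> {}} = Pair i ` {k\<in>PP i. CompK i k \<inter> T \<noteq> {}}"
      by (auto intro!: image_eqI)
    then show ?thesis by (simp add: prod.reindex inj_on_def Bhf_def)
  qed
  show ?thesis using sb unfolding seteq CSH_def[symmetric] B1_def prodeq by simp
qed

end



lemma card_diff_ge1: "finite X \<Longrightarrow> \<exists>w\<in>X. w \<noteq> z \<Longrightarrow> 1 \<le> real (card (X - {z}))"
proof -
  assume f: "finite X" and e: "\<exists>w\<in>X. w \<noteq> z"
  then have "X - {z} \<noteq> {}" by blast
  then have "card (X - {z}) > 0" using f by (simp add: card_gt_0_iff)
  then show ?thesis by simp
qed

lemma swap2: "(\<Sum>b\<in>B. \<Sum>i\<in>I. \<Sum>j\<in>J i. f b i j) = (\<Sum>i\<in>I. \<Sum>j\<in>J i. \<Sum>b\<in>B. f b i j)"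
proof -
  have "(\<Sum>b\<in>B. \<Sum>i\<in>I. \<Sum>j\<in>J i. f b i j) = (\<Sum>i\<in>I. \<Sum>b\<in>B. \<Sum>j\<in>J i. f b i j)"
    by (rule sum.swap)
  also have "\<dots> = (\<Sum>i\<in>I. \<Sum>j\<in>J i. \<Sum>b\<in>B. f b i j)"
    by (rule sum.cong[OF refl], rule sum.swap)
  finally show ?thesis .
qed

lemma swap3: "(\<Sum>a\<in>A. \<Sum>b\<in>B. \<Sum>i\<in>I. \<Sum>j\<in>J i. f a b i j) = (\<Sum>i\<in>I. \<Sum>j\<in>J i. \<Sum>a\<in>A. \<Sum>b\<in>B. f a b i j)"
proof -
  have "(\<Sum>a\<in>A. \<Sum>b\<in>B. \<Sum>i\<in>I. \<Sum>j\<in>J i. f a b i j) = (\<Sum>a\<in>A. \<Sum>i\<in>I. \<Sum>j\<in>J i. \<Sum>b\<in>B. f a b i j)"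
    by (rule sum.cong[OF refl], rule swap2)
  also have "\<dots> = (\<Sum>i\<in>I. \<Sum>j\<in>J i. \<Sum>a\<in>A. \<Sum>b\<in>B. f a b i j)"
    by (rule swap2)
  finally show ?thesis .
qed

context pieces begin

definition "c1 n WF HF m i j = real (card (Cand1 n WF HF i j (usub n m i) (lk WF HF (usub n m) i) - {wtr WF (usub n m) i}))"
definition "c2 n WF m i j = real (card (Cand2 n WF i j (usub n m i) (wtr WF (usub n m) i)
              - {restrict (usub n m i) (DD i j \<union> (A j \<inter> SP S (PP i)))}))"
definition "bnd n = (\<Sum>i\<in>I. \<Sum>j\<in>SP S (PP i). B1 n i j + B2 n i j)"
definition "bad n WF HF m \<longleftrightarrow> (\<exists>j. gdec n WF HF j (\<lambda>k. fenc n WF HF k m) m \<noteq> m j)"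

lemma fin_Cand1: "finite (Cand1 n WF HF i j uu Lk)"
  unfolding Cand1_def by (rule finite_subset[OF _ finite_PiE[of "Comp i" "\<lambda>J. {1..BW n i J}"]]) auto
lemma fin_Cand2: "finite (Cand2 n WF i j uu w)"
  unfolding Cand2_def by (rule finite_subset[OF _ finite_PiE[of "DD i j \<union> (A j \<inter> SP S (PP i))" "\<lambda>t. {1..Bm n i t}"]]) auto

lemma bad_le:
  assumes WF: "WF \<in> CSW n" and HF: "HF \<in> CSH n" and m: "m \<in> msg_set n Rt"
  shows "(if bad n WF HF m then 1 else 0::real) \<le> (\<Sum>i\<in>I. \<Sum>j\<in>SP S (PP i). c1 n WF HF m i j + c2 n WF m i j)"
proof (cases "bad n WF HF m")
  case False
  then show ?thesis by (simp add: sum_nonneg c1_def c2_def)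
next
  case True
  then obtain i j where i: "i \<in> I" and j: "j \<in> SP S (PP i)" and e: "err1 n WF HF m i j \<or> err2 n WF m i j"
    using decoding_correct[OF WF HF m] unfolding bad_def by blast
  have "1 \<le> c1 n WF HF m i j + c2 n WF m i j"
  proof -
    have "err1 n WF HF m i j \<Longrightarrow> 1 \<le> c1 n WF HF m i j"
      unfolding err1_def c1_def by (rule card_diff_ge1[OF fin_Cand1])
    moreover have "err2 n WF m i j \<Longrightarrow> 1 \<le> c2 n WF m i j"
      unfolding err2_def c2_def by (rule card_diff_ge1[OF fin_Cand2])
    ultimately show ?thesis using e by (auto simp: c1_def c2_def add_increasing add_increasing2)
  qed
  also have "\<dots> \<le> (\<Sum>j\<in>SP S (PP i). c1 n WF HF m i j + c2 n WF m i j)"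
    by (rule member_le_sum) (use j in \<open>auto simp: c1_def c2_def\<close>)
  also have "\<dots> \<le> (\<Sum>i\<in>I. \<Sum>j\<in>SP S (PP i). c1 n WF HF m i j + c2 n WF m i j)"
    by (rule member_le_sum[where f="\<lambda>i. \<Sum>j\<in>SP S (PP i). c1 n WF HF m i j + c2 n WF m i j"])
       (use i finI in \<open>auto simp: c1_def c2_def intro!: sum_nonneg\<close>)
  finally show ?thesis using True by simp
qed

lemma avg_bad:
  assumes m: "m \<in> msg_set n Rt"
  shows "(\<Sum>WF\<in>CSW n. \<Sum>HF\<in>CSH n. if bad n WF HF m then 1 else 0::real)
         \<le> real (card (CSW n)) * real (card (CSH n)) * bnd n"
proof -
  let ?W = "CSW n" and ?H = "CSH n"
  have "(\<Sum>WF\<in>?W. \<Sum>HF\<in>?H. if bad n WF HF m then 1 else 0::real)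
      \<le> (\<Sum>WF\<in>?W. \<Sum>HF\<in>?H. \<Sum>i\<in>I. \<Sum>j\<in>SP S (PP i). c1 n WF HF m i j + c2 n WF m i j)"
    by (intro sum_mono bad_le[OF _ _ m])
  also have "\<dots> = (\<Sum>i\<in>I. \<Sum>j\<in>SP S (PP i). (\<Sum>WF\<in>?W. \<Sum>HF\<in>?H. c1 n WF HF m i j) + (\<Sum>WF\<in>?W. \<Sum>HF\<in>?H. c2 n WF m i j))"
    unfolding swap3 by (simp only: sum.distrib)
  also have "\<dots> \<le> (\<Sum>i\<in>I. \<Sum>j\<in>SP S (PP i). real (card ?W) * real (card ?H) * B1 n i j + real (card ?W) * real (card ?H) * B2 n i j)"
  proof (intro sum_mono add_mono)
    fix i j assume i: "i \<in> I" and j: "j \<in> SP S (PP i)"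
    have "(\<Sum>WF\<in>?W. \<Sum>HF\<in>?H. c1 n WF HF m i j) \<le> (\<Sum>WF\<in>?W. real (card ?H) * B1 n i j)"
      by (intro sum_mono) (use stage1[OF _ m i j] in \<open>simp add: c1_def\<close>)
    then show "(\<Sum>WF\<in>?W. \<Sum>HF\<in>?H. c1 n WF HF m i j) \<le> real (card ?W) * real (card ?H) * B1 n i j"
      by simp
    have "(\<Sum>WF\<in>?W. \<Sum>HF\<in>?H. c2 n WF m i j) = real (card ?H) * (\<Sum>WF\<in>?W. c2 n WF m i j)"
      by (simp add: sum_distrib_left)
    also have "\<dots> \<le> real (card ?H) * (real (card ?W) * B2 n i j)"
      by (intro mult_left_mono) (use stage2[OF m i j] in \<open>simp_all add: c2_def\<close>)
    finally show "(\<Sum>WF\<in>?W. \<Sum>HF\<in>?H. c2 n WF m i j) \<le> real (card ?W) * real (card ?H) * B2 n i j"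
      by (simp add: mult_ac)
  qed
  also have "\<dots> = real (card ?W) * real (card ?H) * bnd n"
    unfolding bnd_def by (simp add: sum_distrib_left distrib_left)
  finally show ?thesis .
qed

end



lemma pow2_real: "real ((2::nat) ^ k) = 2 powr real k"
  by (simp add: powr_realpow)

lemma prod_pow2_ceil_le:
  assumes "\<forall>t\<in>T. 0 \<le> x t"
  shows "real (\<Prod>t\<in>T. (2::nat) ^ nat \<lceil>x t\<rceil>) \<le> 2 powr (\<Sum>t\<in>T. x t + 1)"
proof -
  have "real (\<Prod>t\<in>T. (2::nat) ^ nat \<lceil>x t\<rceil>) = (\<Prod>t\<in>T. 2 powr real (nat \<lceil>x t\<rceil>))"
    by (simp add: pow2_real del: of_nat_power)
  also have "\<dots> \<le> (\<Prod>t\<in>T. 2 powr (x t + 1))"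
  proof (rule prod_mono)
    fix t assume "t \<in> T"
    then have "0 \<le> x t" using assms by auto
    then have "real (nat \<lceil>x t\<rceil>) \<le> x t + 1" by linarith
    then show "0 \<le> 2 powr real (nat \<lceil>x t\<rceil>) \<and> 2 powr real (nat \<lceil>x t\<rceil>) \<le> 2 powr (x t + 1)"
      by (simp add: powr_mono)
  qed
  also have "\<dots> = 2 powr (\<Sum>t\<in>T. x t + 1)" by (simp add: powr_sum)
  finally show ?thesis .
qed

lemma prod_pow2_floor_le:
  assumes "\<forall>t\<in>T. 0 \<le> x t"
  shows "real (\<Prod>t\<in>T. (2::nat) ^ nat \<lfloor>x t\<rfloor>) \<le> 2 powr (\<Sum>t\<in>T. x t)"
proof -
  have "real (\<Prod>t\<in>T. (2::nat) ^ nat \<lfloor>x t\<rfloor>) = (\<Prod>t\<in>T. 2 powr real (nat \<lfloor>x t\<rfloor>))"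
    by (simp add: pow2_real del: of_nat_power)
  also have "\<dots> \<le> (\<Prod>t\<in>T. 2 powr (x t))"
  proof (rule prod_mono)
    fix t assume "t \<in> T"
    then have "0 \<le> x t" using assms by auto
    then have "real (nat \<lfloor>x t\<rfloor>) \<le> x t" by linarith
    then show "0 \<le> 2 powr real (nat \<lfloor>x t\<rfloor>) \<and> 2 powr real (nat \<lfloor>x t\<rfloor>) \<le> 2 powr (x t)"
      by (simp add: powr_mono)
  qed
  also have "\<dots> = 2 powr (\<Sum>t\<in>T. x t)" by (simp add: powr_sum)
  finally show ?thesis .
qed

lemma prod_pow2_floor_ge:
  shows "2 powr (\<Sum>t\<in>T. x t - 1) \<le> real (\<Prod>t\<in>T. (2::nat) ^ nat \<lfloor>x t\<rfloor>)"
proof -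
  have "2 powr (\<Sum>t\<in>T. x t - 1) = (\<Prod>t\<in>T. 2 powr (x t - 1))" by (simp add: powr_sum)
  also have "\<dots> \<le> (\<Prod>t\<in>T. 2 powr real (nat \<lfloor>x t\<rfloor>))"
  proof (rule prod_mono)
    fix t assume "t \<in> T"
    have "x t - 1 \<le> real (nat \<lfloor>x t\<rfloor>)" by linarith
    then show "0 \<le> 2 powr (x t - 1) \<and> 2 powr (x t - 1) \<le> 2 powr real (nat \<lfloor>x t\<rfloor>)"
      by (simp add: powr_mono)
  qed
  also have "\<dots> = real (\<Prod>t\<in>T. (2::nat) ^ nat \<lfloor>x t\<rfloor>)"
    by (simp add: pow2_real del: of_nat_power)
  finally show ?thesis .
qed

lemma ratio_decay:
  fixes f :: "nat \<Rightarrow> real"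
  assumes "\<forall>n. 0 \<le> f n" "\<forall>n. f n \<le> 2 powr (real n * a + c)" "a < 0"
  shows "f \<longlonglongrightarrow> 0"
proof (rule tendsto_sandwich[of "\<lambda>_. 0" f sequentially "\<lambda>n. 2 powr c * (2 powr a) ^ n"])
  show "\<forall>\<^sub>F n in sequentially. 0 \<le> f n" using assms(1) by simp
  have "2 powr (real n * a + c) = 2 powr c * (2 powr a) ^ n" for n
    by (simp add: powr_add powr_realpow[symmetric] powr_powr mult.commute)
  then show "\<forall>\<^sub>F n in sequentially. f n \<le> 2 powr c * (2 powr a) ^ n" using assms(2) by simp
  have "norm (2 powr a) < 1" using powr_less_one[of 2 a] assms(3) by simp
  then have "(\<lambda>n. (2 powr a) ^ n) \<longlonglongrightarrow> 0" by (rule LIMSEQ_power_zero)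
  then show "(\<lambda>n. 2 powr c * (2 powr a) ^ n) \<longlonglongrightarrow> 0" using tendsto_mult_right_zero by blast
qed simp

lemma frac_bound:
  fixes x y X Y :: real
  assumes "0 \<le> x" "x \<le> 2 powr p" "2 powr q \<le> y"
  shows "x / y \<le> 2 powr (p - q)"
proof -
  have "0 < 2 powr q" by simp
  then have "x / y \<le> 2 powr p / 2 powr q" using assms by (intro frac_le) auto
  then show ?thesis by (simp add: powr_diff)
qed

context pieces begin

lemma B2_lim:
  assumes i: "i \<in> I" and j: "j \<in> SP S (PP i)"
  shows "(\<lambda>n. B2 n i j) \<longlonglongrightarrow> 0"
  unfolding B2_def
proof (rule tendsto_null_sum)
  fix T assume T: "T \<in> {T. T \<subseteq> DD i j \<and> T \<noteq> {}}"
  let ?JJ = "{J\<in>Comp i. J \<subseteq> DD i j \<union> A j \<and> J \<inter> T \<noteq> {}}"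
  let ?a = "(\<Sum>t\<in>T. rr i t) - (\<Sum>J\<in>?JJ. gg i J)"
  have "?a < 0"
  proof -
    have DDp: "DD i j \<subseteq> SP S (PP i)" using DD_props[OF i j] by auto
    have "(\<Sum>J\<in>{J. J \<subseteq> DD i j \<union> (A j \<inter> SP S (PP i)) \<and> J \<inter> T \<noteq> {}}. gg i J) = (\<Sum>J\<in>?JJ. gg i J)"
    proof (rule sum.mono_neutral_right)
      show "finite {J. J \<subseteq> DD i j \<union> (A j \<inter> SP S (PP i)) \<and> J \<inter> T \<noteq> {}}" by simp
      show "?JJ \<subseteq> {J. J \<subseteq> DD i j \<union> (A j \<inter> SP S (PP i)) \<and> J \<inter> T \<noteq> {}}"
        using Comp_sub[of _ i] by blast
      show "\<forall>J\<in>{J. J \<subseteq> DD i j \<union> (A j \<inter> SP S (PP i)) \<and> J \<inter> T \<noteq> {}} - ?JJ. gg i J = 0"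
        using gg_zero i unfolding Comp_def by auto
    qed
    moreover have "(\<Sum>t\<in>T. rr i t) < (\<Sum>J\<in>{J. J \<subseteq> DD i j \<union> (A j \<inter> SP S (PP i)) \<and> J \<inter> T \<noteq> {}}. gg i J)"
      using condA i j T by simp
    ultimately show ?thesis by linarith
  qed
  show "(\<lambda>n. real (\<Prod>t\<in>T. Bm n i t) / real (\<Prod>J\<in>?JJ. BW n i J)) \<longlonglongrightarrow> 0"
  proof (rule ratio_decay[OF _ _ \<open>?a < 0\<close>, where c = "real (card T) + real (card ?JJ)"])
    show "\<forall>n. 0 \<le> real (\<Prod>t\<in>T. Bm n i t) / real (\<Prod>J\<in>?JJ. BW n i J)"
      by (intro allI divide_nonneg_nonneg) (simp_all add: prod_nonneg)
    show "\<forall>n. real (\<Prod>t\<in>T. Bm n i t) / real (\<Prod>J\<in>?JJ. BW n i J) \<le> 2 powr (real n * ?a + (real (card T) + real (card ?JJ)))"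
    proof
      fix n
      have "real (\<Prod>t\<in>T. Bm n i t) \<le> 2 powr (\<Sum>t\<in>T. real n * rr i t + 1)"
        unfolding Bm_def by (rule prod_pow2_ceil_le) (use rr_nn i in auto)
      moreover have "2 powr (\<Sum>J\<in>?JJ. real n * gg i J - 1) \<le> real (\<Prod>J\<in>?JJ. BW n i J)"
        unfolding BW_def by (rule prod_pow2_floor_ge)
      ultimately have "real (\<Prod>t\<in>T. Bm n i t) / real (\<Prod>J\<in>?JJ. BW n i J) \<le>
          2 powr ((\<Sum>t\<in>T. real n * rr i t + 1) - (\<Sum>J\<in>?JJ. real n * gg i J - 1))"
        by (intro frac_bound) (auto simp: prod_nonneg)
      also have "(\<Sum>t\<in>T. real n * rr i t + 1) - (\<Sum>J\<in>?JJ. real n * gg i J - 1) = real n * ?a + (real (card T) + real (card ?JJ))"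
        by (simp add: sum.distrib sum_subtractf sum_distrib_left[symmetric] algebra_simps)
      finally show "real (\<Prod>t\<in>T. Bm n i t) / real (\<Prod>J\<in>?JJ. BW n i J) \<le> 2 powr (real n * ?a + (real (card T) + real (card ?JJ)))" .
    qed
  qed
qed

lemma B1_lim:
  assumes i: "i \<in> I" and j: "j \<in> SP S (PP i)"
  shows "(\<lambda>n. B1 n i j) \<longlonglongrightarrow> 0"
  unfolding B1_def
proof (rule tendsto_null_sum)
  fix E assume E: "E \<in> {E. E \<subseteq> {J\<in>Comp i. \<not> J \<subseteq> A j} \<and> E \<noteq> {}}"
  let ?K = "{k\<in>PP i. CompK i k \<inter> E \<noteq> {}}"
  let ?a = "(\<Sum>J\<in>E. gg i J) - (\<Sum>k\<in>?K. CP i k)"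
  have EC: "E \<subseteq> Comp i" using E by auto
  have "?a < 0"
  proof -
    let ?SB = "{J \<in> Iset S ?K. J \<notin> Iset S (PP i - ?K) \<and> \<not> J \<subseteq> A j \<inter> SP S (PP i)}"
    obtain J0 where J0: "J0 \<in> E" using E by auto
    then obtain k0 where k0: "k0 \<in> PP i" "J0 \<subseteq> S k0" "J0 \<noteq> {}" using EC unfolding Comp_def Iset_def by auto
    have "k0 \<in> ?K" using k0 J0 EC unfolding CompK_def by auto
    then have Kne: "?K \<noteq> {}" by auto
    have ESB: "E \<subseteq> ?SB"
    proof
      fix J assume J: "J \<in> E"
      then obtain k where k: "k \<in> PP i" "J \<subseteq> S k" "J \<noteq> {}" using EC unfolding Comp_def Iset_def by auto
      have "k \<in> ?K" using k J EC unfolding CompK_def by auto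
      then have "J \<in> Iset S ?K" using k unfolding Iset_def by auto
      moreover have "J \<notin> Iset S (PP i - ?K)"
      proof
        assume "J \<in> Iset S (PP i - ?K)"
        then obtain k' where "k' \<in> PP i" "k' \<notin> ?K" "J \<subseteq> S k'" unfolding Iset_def by auto
        then show False using J EC unfolding CompK_def by auto
      qed
      moreover have "\<not> J \<subseteq> A j \<inter> SP S (PP i)" using J E by auto
      ultimately show "J \<in> ?SB" by auto
    qed
    have "(\<Sum>J\<in>E. gg i J) \<le> (\<Sum>J\<in>?SB. gg i J)"
    proof (rule sum_mono2)
      show "finite ?SB" by simp
      show "E \<subseteq> ?SB" by (rule ESB)
      fix J assume "J \<in> ?SB - E"
      then have "J \<in> Iset S (PP i)" unfolding Iset_def by auto
      then show "0 \<le> gg i J" using gg_nn i by auto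
    qed
    also have "\<dots> < (\<Sum>k\<in>?K. CP i k)" using condB i j Kne by auto
    finally show ?thesis by simp
  qed
  show "(\<lambda>n. real (\<Prod>J\<in>E. BW n i J) / real (\<Prod>k\<in>?K. Bh n i k)) \<longlonglongrightarrow> 0"
  proof (rule ratio_decay[OF _ _ \<open>?a < 0\<close>, where c = "real (card ?K)"])
    show "\<forall>n. 0 \<le> real (\<Prod>J\<in>E. BW n i J) / real (\<Prod>k\<in>?K. Bh n i k)"
      by (intro allI divide_nonneg_nonneg) (simp_all add: prod_nonneg)
    show "\<forall>n. real (\<Prod>J\<in>E. BW n i J) / real (\<Prod>k\<in>?K. Bh n i k) \<le> 2 powr (real n * ?a + real (card ?K))"
    proof
      fix n
      have "real (\<Prod>J\<in>E. BW n i J) \<le> 2 powr (\<Sum>J\<in>E. real n * gg i J)"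
        unfolding BW_def by (rule prod_pow2_floor_le) (use gg_nn i EC in \<open>auto simp: Comp_def\<close>)
      moreover have "2 powr (\<Sum>k\<in>?K. real n * CP i k - 1) \<le> real (\<Prod>k\<in>?K. Bh n i k)"
        unfolding Bh_def by (rule prod_pow2_floor_ge)
      ultimately have "real (\<Prod>J\<in>E. BW n i J) / real (\<Prod>k\<in>?K. Bh n i k) \<le>
          2 powr ((\<Sum>J\<in>E. real n * gg i J) - (\<Sum>k\<in>?K. real n * CP i k - 1))"
        by (intro frac_bound) (auto simp: prod_nonneg)
      also have "(\<Sum>J\<in>E. real n * gg i J) - (\<Sum>k\<in>?K. real n * CP i k - 1) = real n * ?a + real (card ?K)"
        by (simp add: sum.distrib sum_subtractf sum_distrib_left[symmetric] algebra_simps)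
      finally show "real (\<Prod>J\<in>E. BW n i J) / real (\<Prod>k\<in>?K. Bh n i k) \<le> 2 powr (real n * ?a + real (card ?K))" .
    qed
  qed
qed

lemma bnd_lim: "bnd \<longlonglongrightarrow> 0"
proof -
  have "(\<lambda>n. bnd n) \<longlonglongrightarrow> 0"
    unfolding bnd_def
    by (intro tendsto_null_sum tendsto_add_zero B1_lim B2_lim) auto
  then show ?thesis by simp
qed

end



lemma CSp_fin_ne:
  assumes "finite X" "\<forall>x\<in>X. finite (Dom x)" "\<forall>x. B x \<ge> 1"
  shows "finite (CSp X Dom B)" "CSp X Dom B \<noteq> {}"
proof -
  show "finite (CSp X Dom B)" unfolding CSp_def using assms by (auto intro!: finite_PiE)
  have "\<forall>x\<in>X. PiE (Dom x) (\<lambda>_. {1..B x}) \<noteq> {}" using assms(3) by (auto simp: PiE_eq_empty_iff)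
  then show "CSp X Dom B \<noteq> {}" unfolding CSp_def by (simp add: PiE_eq_empty_iff)
qed

context pieces begin

lemma CSW_fin_ne: "finite (CSW n)" "CSW n \<noteq> {}"
  unfolding CSW_def using CSp_fin_ne[OF finXW finDomW] BW_pos by (auto simp: BWf_def split: prod.splits)
lemma CSH_fin_ne: "finite (CSH n)" "CSH n \<noteq> {}"
  unfolding CSH_def using CSp_fin_ne[OF finXH finDomH] Bh_pos by (auto simp: Bhf_def split: prod.splits)

lemma msg_PiE: "msg_set n Rt = PiE UNIV (\<lambda>t. {1..Msz n t})"
  unfolding msg_set_iff[symmetric, of _ n] by (auto simp: PiE_iff msg_set_iff)

lemma msg_fin_ne: "finite (msg_set n Rt)" "msg_set n Rt \<noteq> {}"
proof -
  show "finite (msg_set n Rt)" unfolding msg_PiE by (rule finite_PiE) auto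
  have "(\<lambda>_. 1) \<in> msg_set n Rt" unfolding msg_set_iff by (auto simp: Msz_def)
  then show "msg_set n Rt \<noteq> {}" by auto
qed

lemma err_eq: "err_prob n Rt (\<lambda>k m. fenc n WF HF k m) (\<lambda>j L m. gdec n WF HF j L m)
   = (\<Sum>m\<in>msg_set n Rt. if bad n WF HF m then 1 else 0) / real (card (msg_set n Rt))"
proof -
  have "real (card {m \<in> msg_set n Rt. bad n WF HF m}) = (\<Sum>m\<in>msg_set n Rt. if bad n WF HF m then 1 else 0)"
    using msg_fin_ne(1) by (simp add: sum.If_cases Int_def)
  then show ?thesis unfolding err_prob_def bad_def by simp
qed

lemma good_code:
  "\<exists>WF\<in>CSW n. \<exists>HF\<in>CSH n. err_prob n Rt (\<lambda>k m. fenc n WF HF k m) (\<lambda>j L m. gdec n WF HF j L m) \<le> bnd n"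
proof (rule ccontr)
  let ?M = "msg_set n Rt" and ?W = "CSW n" and ?H = "CSH n"
  let ?e = "\<lambda>WF HF. err_prob n Rt (\<lambda>k m. fenc n WF HF k m) (\<lambda>j L m. gdec n WF HF j L m)"
  let ?b = "\<lambda>WF HF m. if bad n WF HF m then 1 else 0::real"
  assume "\<not> ?thesis"
  then have gt: "\<forall>WF\<in>?W. \<forall>HF\<in>?H. bnd n < ?e WF HF" by (auto simp: not_le)
  have Mpos: "real (card ?M) > 0" using msg_fin_ne by (simp add: card_gt_0_iff)
  have "(\<Sum>WF\<in>?W. \<Sum>HF\<in>?H. bnd n) < (\<Sum>WF\<in>?W. \<Sum>HF\<in>?H. ?e WF HF)"
    using gt CSW_fin_ne CSH_fin_ne by (intro sum_strict_mono) auto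
  also have "\<dots> = (\<Sum>WF\<in>?W. \<Sum>HF\<in>?H. \<Sum>m\<in>?M. ?b WF HF m) / real (card ?M)"
    unfolding err_eq by (simp add: sum_divide_distrib)
  also have "(\<Sum>WF\<in>?W. \<Sum>HF\<in>?H. \<Sum>m\<in>?M. ?b WF HF m) = (\<Sum>m\<in>?M. \<Sum>WF\<in>?W. \<Sum>HF\<in>?H. ?b WF HF m)"
  proof -
    have "(\<Sum>WF\<in>?W. \<Sum>HF\<in>?H. \<Sum>m\<in>?M. ?b WF HF m) = (\<Sum>WF\<in>?W. \<Sum>m\<in>?M. \<Sum>HF\<in>?H. ?b WF HF m)"
      by (rule sum.cong[OF refl], rule sum.swap)
    also have "\<dots> = (\<Sum>m\<in>?M. \<Sum>WF\<in>?W. \<Sum>HF\<in>?H. ?b WF HF m)" by (rule sum.swap)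
    finally show ?thesis .
  qed
  also have "(\<Sum>m\<in>?M. \<Sum>WF\<in>?W. \<Sum>HF\<in>?H. ?b WF HF m) / real (card ?M) \<le>
        (\<Sum>m\<in>?M. real (card ?W) * real (card ?H) * bnd n) / real (card ?M)"
    by (intro divide_right_mono sum_mono avg_bad) auto
  also have "\<dots> = real (card ?W) * real (card ?H) * bnd n" using Mpos by simp
  finally show False by simp
qed

lemma achievable_Rt: "achievable S A C Rt"
proof -
  have "\<forall>n. \<exists>p. fst p \<in> CSW n \<and> snd p \<in> CSH n \<and>
     err_prob n Rt (\<lambda>k m. fenc n (fst p) (snd p) k m) (\<lambda>j L m. gdec n (fst p) (snd p) j L m) \<le> bnd n"
    using good_code by fastforce
  then obtain p where p: "\<forall>n. fst (p n) \<in> CSW n \<and> snd (p n) \<in> CSH n \<and>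
     err_prob n Rt (\<lambda>k m. fenc n (fst (p n)) (snd (p n)) k m) (\<lambda>j L m. gdec n (fst (p n)) (snd (p n)) j L m) \<le> bnd n"
    by metis
  let ?f = "\<lambda>n k m. fenc n (fst (p n)) (snd (p n)) k m"
  let ?g = "\<lambda>n j L m. gdec n (fst (p n)) (snd (p n)) j L m"
  have code: "\<forall>n. is_code S A C n Rt (?f n) (?g n)" using is_code_fg p by blast
  have lim: "(\<lambda>n. err_prob n Rt (?f n) (?g n)) \<longlonglongrightarrow> 0"
  proof (rule tendsto_sandwich[of "\<lambda>_. 0" _ sequentially bnd])
    show "\<forall>\<^sub>F n in sequentially. 0 \<le> err_prob n Rt (?f n) (?g n)"
      unfolding err_prob_def by simp
    show "\<forall>\<^sub>F n in sequentially. err_prob n Rt (?f n) (?g n) \<le> bnd n" using p by simp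
    show "bnd \<longlonglongrightarrow> 0" by (rule bnd_lim)
  qed simp
  have nn: "\<forall>i. Rt $ i \<ge> 0" unfolding Rt_def using rr_nn by (simp add: sum_nonneg)
  show ?thesis unfolding achievable_def
    by (intro conjI nn exI[where x = ?f] exI[where x = ?g]) (use code lim in auto)
qed

end



definition "goodDG S A P CPP r D \<gamma> \<longleftrightarrow> decoding_choice S A P D \<and>
     (\<forall>j. r $ j \<ge> 0) \<and> (\<forall>j. j \<notin> SP S P \<longrightarrow> r $ j = 0) \<and>
        (\<forall>J \<in> Iset S P. \<gamma> J \<ge> 0) \<and> (\<forall>J. J \<notin> Iset S P \<longrightarrow> \<gamma> J = 0) \<and>
        (\<forall>j \<in> SP S P. \<forall>T. T \<noteq> {} \<and> T \<subseteq> D j \<longrightarrow>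
           (\<Sum>i\<in>T. r $ i) <
           (\<Sum>J1 \<in> {J. J \<subseteq> D j \<union> (A j \<inter> SP S P) \<and> J \<inter> T \<noteq> {}}. \<gamma> J1)) \<and>
        (\<forall>j \<in> SP S P. \<forall>K. K \<noteq> {} \<and> K \<subseteq> P \<longrightarrow>
           (\<Sum>J2 \<in> {J \<in> Iset S K. J \<notin> Iset S (P - K) \<and> \<not> J \<subseteq> A j \<inter> SP S P}. \<gamma> J2)
           < (\<Sum>k\<in>K. CPP k))"

lemma region_P_good:
  assumes "r \<in> region_P S A P CPP" shows "\<exists>D \<gamma>. goodDG S A P CPP r D \<gamma>"
proof -
  obtain D where D: "decoding_choice S A P D" and rD: "r \<in> region_D S A P CPP D"
    using assms unfolding region_P_def by auto
  from rD have "(\<forall>j. r $ j \<ge> 0) \<and> (\<forall>j. j \<notin> SP S P \<longrightarrow> r $ j = 0) \<and>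
     (\<exists>\<gamma>.
        (\<forall>J \<in> Iset S P. \<gamma> J \<ge> 0) \<and> (\<forall>J. J \<notin> Iset S P \<longrightarrow> \<gamma> J = 0) \<and>
        (\<forall>j \<in> SP S P. \<forall>T. T \<noteq> {} \<and> T \<subseteq> D j \<longrightarrow>
           (\<Sum>i\<in>T. r $ i) <
           (\<Sum>J1 \<in> {J. J \<subseteq> D j \<union> (A j \<inter> SP S P) \<and> J \<inter> T \<noteq> {}}. \<gamma> J1)) \<and>
        (\<forall>j \<in> SP S P. \<forall>K. K \<noteq> {} \<and> K \<subseteq> P \<longrightarrow>
           (\<Sum>J2 \<in> {J \<in> Iset S K. J \<notin> Iset S (P - K) \<and> \<not> J \<subseteq> A j \<inter> SP S P}. \<gamma> J2)
           < (\<Sum>k\<in>K. CPP k)))"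
    unfolding region_D_def mem_Collect_eq .
  then obtain \<gamma> where p1: "\<forall>j. r $ j \<ge> 0" and p2: "\<forall>j. j \<notin> SP S P \<longrightarrow> r $ j = 0" and
    q: "(\<forall>J \<in> Iset S P. \<gamma> J \<ge> 0) \<and> (\<forall>J. J \<notin> Iset S P \<longrightarrow> \<gamma> J = 0) \<and>
        (\<forall>j \<in> SP S P. \<forall>T. T \<noteq> {} \<and> T \<subseteq> D j \<longrightarrow>
           (\<Sum>i\<in>T. r $ i) <
           (\<Sum>J1 \<in> {J. J \<subseteq> D j \<union> (A j \<inter> SP S P) \<and> J \<inter> T \<noteq> {}}. \<gamma> J1)) \<and>
        (\<forall>j \<in> SP S P. \<forall>K. K \<noteq> {} \<and> K \<subseteq> P \<longrightarrow>
           (\<Sum>J2 \<in> {J \<in> Iset S K. J \<notin> Iset S (P - K) \<and> \<not> J \<subseteq> A j \<inter> SP S P}. \<gamma> J2)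
           < (\<Sum>k\<in>K. CPP k))"
    by (elim exE conjE) (rule that, assumption+, intro conjI; assumption)
  have "goodDG S A P CPP r D \<gamma>" unfolding goodDG_def
    by (rule conjI[OF D conjI[OF p1 conjI[OF p2 q]]])
  then show ?thesis by blast
qed

lemma scale_less: "(u::real) > 0 \<Longrightarrow> (\<Sum>x\<in>X. f x) < (\<Sum>x\<in>Y. g x) \<Longrightarrow> (\<Sum>x\<in>X. u * f x) < (\<Sum>x\<in>Y. u * g x)"
  by (simp add: sum_distrib_left[symmetric])

theorem main_thm:
  fixes S :: "'k::finite \<Rightarrow> 'm::finite set"
    and A :: "'m \<Rightarrow> 'm set"
    and C :: "'k \<Rightarrow> real"
  assumes "inj S"
    and "(\<Union>k. S k) = UNIV"
    and "\<forall>j. j \<notin> A j"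
    and Cpos: "\<forall>k. C k > 0"
  shows "R_CLS S A C \<subseteq> capacity_region S A C"
proof
  fix R assume "R \<in> R_CLS S A C"
  then obtain K0 :: nat and u x where hx: "\<forall>t\<in>{1..K0}. 0 \<le> u t \<and> x t \<in> \<Union>{R_CLS_part S A Pis CPi | Pis CPi. link_sender_partition Pis \<and> admissible C Pis CPi}"
    and su: "sum u {1..K0} = 1" and Rx: "(\<Sum>t = 1..K0. u t *\<^sub>R x t) = R"
  proof -
    from \<open>R \<in> R_CLS S A C\<close> have "\<exists>K0 u x. (\<forall>t\<in>{1..K0::nat}. 0 \<le> u t \<and> x t \<in> \<Union>{R_CLS_part S A Pis CPi | Pis CPi. link_sender_partition Pis \<and> admissible C Pis CPi})
      \<and> sum u {1..K0} = 1 \<and> (\<Sum>t = 1..K0. u t *\<^sub>R x t) = R"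
      by (simp only: R_CLS_def convex_hull_indexed mem_Collect_eq)
    then show ?thesis by (elim exE conjE) (rule that, assumption+)
  qed
  have "\<forall>t\<in>{1..K0}. \<exists>p. admissible C (fst p) (fst (snd p)) \<and> (\<forall>P\<in>fst p. snd (snd p) P \<in> region_P S A P (fst (snd p) P)) \<and>
      (\<forall>j. x t $ j = (\<Sum>P \<in> {P \<in> fst p. j \<in> SP S P}. snd (snd p) P $ j))"
  proof
    fix t assume t: "t \<in> {1..K0}"
    then obtain Pis CPi where "admissible C Pis CPi" "x t \<in> R_CLS_part S A Pis CPi" using hx by blast
    then obtain rrr where "admissible C Pis CPi" "\<forall>P\<in>Pis. rrr P \<in> region_P S A P (CPi P)"
      "\<forall>j. x t $ j = (\<Sum>P \<in> {P \<in> Pis. j \<in> SP S P}. rrr P $ j)"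
      unfolding R_CLS_part_def by blast
    then show "\<exists>p. admissible C (fst p) (fst (snd p)) \<and> (\<forall>P\<in>fst p. snd (snd p) P \<in> region_P S A P (fst (snd p) P)) \<and>
      (\<forall>j. x t $ j = (\<Sum>P \<in> {P \<in> fst p. j \<in> SP S P}. snd (snd p) P $ j))"
      by (intro exI[of _ "(Pis, CPi, rrr)"]) simp
  qed
  from bchoice[OF this] obtain F where F: "\<forall>t\<in>{1..K0}. admissible C (fst (F t)) (fst (snd (F t))) \<and> (\<forall>P\<in>fst (F t). snd (snd (F t)) P \<in> region_P S A P (fst (snd (F t)) P)) \<and>
      (\<forall>j. x t $ j = (\<Sum>P \<in> {P \<in> fst (F t). j \<in> SP S P}. snd (snd (F t)) P $ j))" ..
  define Pis where "Pis = (\<lambda>t. fst (F t))"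
  define CPi where "CPi = (\<lambda>t. fst (snd (F t)))"
  define rrr where "rrr = (\<lambda>t. snd (snd (F t)))"
  have pc: "\<forall>t\<in>{1..K0}. admissible C (Pis t) (CPi t) \<and> (\<forall>P\<in>Pis t. rrr t P \<in> region_P S A P (CPi t P)) \<and>
      (\<forall>j. x t $ j = (\<Sum>P \<in> {P \<in> Pis t. j \<in> SP S P}. rrr t P $ j))"
    using F unfolding Pis_def CPi_def rrr_def .
  let ?Sig = "Sigma {1..K0} Pis"
  have "\<forall>i\<in>?Sig. \<exists>DG. goodDG S A (snd i) (CPi (fst i) (snd i)) (rrr (fst i) (snd i)) (fst DG) (snd DG)"
  proof
    fix i assume "i \<in> ?Sig"
    then have "rrr (fst i) (snd i) \<in> region_P S A (snd i) (CPi (fst i) (snd i))" using pc by auto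
    then obtain D \<gamma> where "goodDG S A (snd i) (CPi (fst i) (snd i)) (rrr (fst i) (snd i)) D \<gamma>"
      using region_P_good by blast
    then show "\<exists>DG. goodDG S A (snd i) (CPi (fst i) (snd i)) (rrr (fst i) (snd i)) (fst DG) (snd DG)"
      by (intro exI[of _ "(D, \<gamma>)"]) simp
  qed
  from bchoice[OF this] obtain DG where DG: "\<forall>i\<in>?Sig. goodDG S A (snd i) (CPi (fst i) (snd i)) (rrr (fst i) (snd i)) (fst (DG i)) (snd (DG i))" ..
  define T' where "T' = {t\<in>{1..K0}. u t > 0}"
  define I where "I = Sigma T' Pis"
  define PP where "PP = (\<lambda>i::nat \<times> 'k set. snd i)"
  define CP where "CP = (\<lambda>(i::nat \<times> 'k set) k. u (fst i) * CPi (fst i) (snd i) k)"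
  define DD where "DD = (\<lambda>i::nat \<times> 'k set. fst (DG i))"
  define rr where "rr = (\<lambda>(i::nat \<times> 'k set) j. u (fst i) * rrr (fst i) (snd i) $ j)"
  define gg where "gg = (\<lambda>(i::nat \<times> 'k set) J. u (fst i) * snd (DG i) J)"
  have IS: "I \<subseteq> ?Sig" unfolding I_def T'_def by auto
  have upos: "u (fst i) > 0" if "i \<in> I" for i using that unfolding I_def T'_def by auto
  have gd: "goodDG S A (PP i) (CPi (fst i) (snd i)) (rrr (fst i) (snd i)) (DD i) (snd (DG i))" if "i \<in> I" for i
    using DG IS that unfolding PP_def DD_def by auto
  have adm: "admissible C (Pis (fst i)) (CPi (fst i))" "snd i \<in> Pis (fst i)" if "i \<in> I" for i
    using pc that unfolding I_def T'_def by auto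
  have pcs: "pieces S A C I PP CP DD rr gg"
  proof (unfold pieces_def, intro conjI)
    show "finite I" unfolding I_def T'_def by (rule finite_SigmaI) auto
    show "\<forall>i\<in>I. \<forall>k\<in>PP i. 0 < CP i k"
    proof (intro ballI)
      fix i k assume i: "i \<in> I" and k: "k \<in> PP i"
      have "0 < CPi (fst i) (snd i) k" using adm[OF i] k unfolding admissible_def PP_def by auto
      then show "0 < CP i k" using upos[OF i] unfolding CP_def by simp
    qed
    show "\<forall>i\<in>I. \<forall>j. 0 \<le> rr i j"
      using gd upos unfolding goodDG_def rr_def by (simp add: less_imp_le)
    show "\<forall>i\<in>I. \<forall>j. j \<notin> SP S (PP i) \<longrightarrow> rr i j = 0"
      using gd unfolding goodDG_def rr_def by simp
    show "\<forall>i\<in>I. \<forall>J\<in>Iset S (PP i). 0 \<le> gg i J"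
      using gd upos unfolding goodDG_def gg_def by (simp add: less_imp_le)
    show "\<forall>i\<in>I. \<forall>J. J \<notin> Iset S (PP i) \<longrightarrow> gg i J = 0"
      using gd unfolding goodDG_def gg_def by simp
    show "\<forall>i\<in>I. decoding_choice S A (PP i) (DD i)"
      using gd unfolding goodDG_def by simp
    show "\<forall>i\<in>I. \<forall>j\<in>SP S (PP i). \<forall>T. T \<noteq> {} \<and> T \<subseteq> DD i j \<longrightarrow>
           (\<Sum>t\<in>T. rr i t) < (\<Sum>J1 \<in> {J. J \<subseteq> DD i j \<union> (A j \<inter> SP S (PP i)) \<and> J \<inter> T \<noteq> {}}. gg i J1)"
    proof (intro ballI allI impI)
      fix i j T assume i: "i \<in> I" and j: "j \<in> SP S (PP i)" and T: "T \<noteq> {} \<and> T \<subseteq> DD i j"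
      have "(\<Sum>t\<in>T. rrr (fst i) (snd i) $ t) < (\<Sum>J1 \<in> {J. J \<subseteq> DD i j \<union> (A j \<inter> SP S (PP i)) \<and> J \<inter> T \<noteq> {}}. snd (DG i) J1)"
        using gd[OF i] j T unfolding goodDG_def by blast
      then show "(\<Sum>t\<in>T. rr i t) < (\<Sum>J1 \<in> {J. J \<subseteq> DD i j \<union> (A j \<inter> SP S (PP i)) \<and> J \<inter> T \<noteq> {}}. gg i J1)"
        unfolding rr_def gg_def by (rule scale_less[OF upos[OF i]])
    qed
    show "\<forall>i\<in>I. \<forall>j\<in>SP S (PP i). \<forall>K. K \<noteq> {} \<and> K \<subseteq> PP i \<longrightarrow>
           (\<Sum>J2 \<in> {J \<in> Iset S K. J \<notin> Iset S (PP i - K) \<and> \<not> J \<subseteq> A j \<inter> SP S (PP i)}. gg i J2) < (\<Sum>k\<in>K. CP i k)"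
    proof (intro ballI allI impI)
      fix i j K assume i: "i \<in> I" and j: "j \<in> SP S (PP i)" and K: "K \<noteq> {} \<and> K \<subseteq> PP i"
      have "(\<Sum>J2 \<in> {J \<in> Iset S K. J \<notin> Iset S (PP i - K) \<and> \<not> J \<subseteq> A j \<inter> SP S (PP i)}. snd (DG i) J2) < (\<Sum>k\<in>K. CPi (fst i) (snd i) k)"
        using gd[OF i] j K unfolding goodDG_def by blast
      then show "(\<Sum>J2 \<in> {J \<in> Iset S K. J \<notin> Iset S (PP i - K) \<and> \<not> J \<subseteq> A j \<inter> SP S (PP i)}. gg i J2) < (\<Sum>k\<in>K. CP i k)"
        unfolding CP_def gg_def by (rule scale_less[OF upos[OF i]])
    qed
    show "\<forall>k. (\<Sum>i\<in>{i\<in>I. k \<in> PP i}. CP i k) \<le> C k"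
    proof
      fix k
      have "{i\<in>I. k \<in> PP i} = Sigma T' (\<lambda>t. {P\<in>Pis t. k \<in> P})" unfolding I_def PP_def by auto
      then have "(\<Sum>i\<in>{i\<in>I. k \<in> PP i}. CP i k) = (\<Sum>t\<in>T'. \<Sum>P\<in>{P\<in>Pis t. k \<in> P}. u t * CPi t P k)"
        unfolding CP_def by (simp add: sum.Sigma T'_def split_beta)
      also have "\<dots> = (\<Sum>t\<in>T'. u t * (\<Sum>P\<in>{P\<in>Pis t. k \<in> P}. CPi t P k))" by (simp add: sum_distrib_left)
      also have "\<dots> \<le> (\<Sum>t\<in>T'. u t * C k)"
      proof (rule sum_mono)
        fix t assume t: "t \<in> T'"
        then have "(\<Sum>P\<in>{P\<in>Pis t. k \<in> P}. CPi t P k) \<le> C k" using pc unfolding T'_def admissible_def by auto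
        then show "u t * (\<Sum>P\<in>{P\<in>Pis t. k \<in> P}. CPi t P k) \<le> u t * C k"
          using t unfolding T'_def by (intro mult_left_mono) auto
      qed
      also have "\<dots> = C k * (\<Sum>t\<in>T'. u t)" by (simp add: sum_distrib_left mult.commute)
      also have "(\<Sum>t\<in>T'. u t) = sum u {1..K0}"
        unfolding T'_def by (rule sum.mono_neutral_left) (use hx in \<open>auto simp: less_le\<close>)
      finally show "(\<Sum>i\<in>{i\<in>I. k \<in> PP i}. CP i k) \<le> C k" using su by simp
    qed
  qed
  interpret pc: pieces S A C I PP CP DD rr gg by (rule pcs)
  have "pc.Rt = R"
  proof (unfold vec_eq_iff, rule allI)
    fix j
    have "R $ j = (\<Sum>t = 1..K0. u t * x t $ j)" using Rx[symmetric] by simp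
    also have "\<dots> = (\<Sum>t\<in>T'. u t * x t $ j)"
      unfolding T'_def by (rule sum.mono_neutral_right) (use hx in \<open>auto simp: less_le\<close>)
    also have "\<dots> = (\<Sum>t\<in>T'. \<Sum>P\<in>Pis t. u t * rrr t P $ j)"
    proof (rule sum.cong[OF refl])
      fix t assume t: "t \<in> T'"
      have "x t $ j = (\<Sum>P \<in> {P \<in> Pis t. j \<in> SP S P}. rrr t P $ j)" using pc t unfolding T'_def by auto
      also have "\<dots> = (\<Sum>P \<in> Pis t. rrr t P $ j)"
      proof (rule sum.mono_neutral_left)
        show "finite (Pis t)" by simp
        show "{P \<in> Pis t. j \<in> SP S P} \<subseteq> Pis t" by auto
        show "\<forall>P\<in>Pis t - {P \<in> Pis t. j \<in> SP S P}. rrr t P $ j = 0"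
        proof
          fix P assume P: "P \<in> Pis t - {P \<in> Pis t. j \<in> SP S P}"
          then have "(t,P) \<in> I" using t unfolding I_def by auto
          then show "rrr t P $ j = 0" using gd[of "(t,P)"] P unfolding goodDG_def PP_def by auto
        qed
      qed
      finally show "u t * x t $ j = (\<Sum>P\<in>Pis t. u t * rrr t P $ j)" by (simp add: sum_distrib_left)
    qed
    also have "\<dots> = (\<Sum>i\<in>I. rr i j)" unfolding I_def rr_def by (simp add: sum.Sigma T'_def split_beta)
    finally show "pc.Rt $ j = R $ j" unfolding pc.Rt_def by simp
  qed
  then have "achievable S A C R" using pc.achievable_Rt by simp
  then show "R \<in> capacity_region S A C" unfolding capacity_region_def using closure_subset by blast
qed



theorem proposition3:
  fixes S :: "'k::finite \<Rightarrow> 'm::finite set"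
    and A :: "'m \<Rightarrow> 'm set"
    and C :: "'k \<Rightarrow> real"
  assumes "inj S"
    and "(\<Union>k. S k) = UNIV"
    and "\<forall>j. j \<notin> A j"
    and "\<forall>k. C k > 0"
  shows "R_CLS S A C \<subseteq> capacity_region S A C"
  by (rule main_thm[OF assms])

end
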